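(* Let $D=\{(x,z):\ -1<z<0,\ -1<x<z+1\}$, and for $\lambda\in(\tfrac12,\tfrac45)$ let $a=\sqrt{\lambda/(1-\lambda)}$, $P(\lambda)=\{(x,z):\ a-3+\tfrac1a<z-\tfrac{x}{a}<1-a+\tfrac1a,\ 1-a-\tfrac1a<z+\tfrac{x}{a}<a-1-\tfrac1a\}$ and $\chi(x,z,\lambda)$ the indicator of $P(\lambda)$ in $D$. Let $\tfrac12<\lambda_*<\lambda_{**}<\tfrac45$, $\sigma_0\in C^1[\tfrac12,\tfrac45]$, $\psi(x,z,t)=\int_{\lambda_*}^{\lambda_{**}}\cos(\sqrt\lambda\,t)\sigma_0(\lambda)\chi(x,z,\lambda)\,d\lambda$, and $\mathbf U=(u,v,w)$ with $u=-\psi_z$, $v=\int_0^t\psi_z(x,z,s)\,ds$, $w=\psi_x$. For $\mu\in[\lambda_*,\lambda_{**}]$ let $CA(\mu),AB(\mu),BD(\mu),DC(\mu)$ be the sides of $\overline{P(\mu)}$ lying on the lines $z=1+\frac xa+\frac1a-a$, $z=1-\frac xa-\frac1a-a$, $z=\frac xa+\frac1a+a-3$, $z=-\frac xa-\frac1a+a-1$ respectively ($a=a(\mu)$), and let $\Sigma_{CA}=\bigcup_{\mu\in[\lambda_*,\lambda_{**}]}CA(\mu)$, and similarly $\Sigma_{AB},\Sigma_{BD},\Sigma_{DC}$. Let $D_1,D_2,D_3,D_4$ be the interiors of $\Sigma_{CA}\cap\Sigma_{DC}$, $\Sigma_{CA}\cap\Sigma_{AB}$, $\Sigma_{AB}\cap\Sigma_{BD}$,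 $\Sigma_{BD}\cap\Sigma_{DC}$, and let $\Omega_0$ be the interior of $D\setminus(D_1\cup D_2\cup D_3\cup D_4)$ (equivalently $\Omega_0$ is, up to the common boundaries, $\bigcup_{i=5}^{13}D_i$). Then $\mathbf U$ has property $S$ in $\Omega_0$: for every Lipschitz subdomain $\Omega_1\subset\Omega_0$ the quantity $\int_{\Omega_1}(|u|^2+|v|^2+|w|^2)\,dx\,dz$ does not depend on $t$.
   Context: In the paper, $S(\lambda_* )=\partial P(\lambda_* )$ and $S(\lambda_{**})=\partial P(\lambda_{**})$ divide $D$ into subdomains $D_1,\dots,D_{13}$: $D_1,\dots,D_4$ are the four corner regions where two of the swept strips of sides overlap, $D_5,\dots,D_8$ are the parts of the four strips swept by a single side, and $D_9,\dots,D_{13}$ are the regions not met by any $S(\mu)$, $\mu\in[\lambda_*,\lambda_{**}]$. $\mathbf U$ is the velocity field (inertial wave) of the linearized rotating-fluid system $u_t=v-p_x$, $v_t=-u$, $w_t=-p_z$, $u_x+w_z=0$ with no-flux boundary condition, associated with the stream function $\psi$. *)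

theory Defs
  imports "HOL-Analysis.Analysis"
begin

definition aa :: "real \<Rightarrow> real" where
  "aa l = sqrt (l / (1 - l))"

definition Dom :: "(real \<times> real) set" where
  "Dom = {(x, z). -1 < z \<and> z < 0 \<and> -1 < x \<and> x < z + 1}"

definition Pset :: "real \<Rightarrow> (real \<times> real) set" where
  "Pset l = {(x, z). aa l - 3 + 1 / aa l < z - x / aa l \<and> z - x / aa l < 1 - aa l + 1 / aa l
                   \<and> 1 - aa l - 1 / aa l < z + x / aa l \<and> z + x / aa l < aa l - 1 - 1 / aa l}"

definition chi :: "real \<Rightarrow> real \<Rightarrow> real \<Rightarrow> real" where
  "chi x z l = indicator (Pset l \<inter> Dom) (x, z)"

definition psi :: "real \<Rightarrow> real \<Rightarrow> (real \<Rightarrow> real) \<Rightarrow> real \<Rightarrow> real \<Rightarrow> real \<Rightarrow> real" where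
  "psi ls lss \<sigma>0 x z t = integral {ls..lss} (\<lambda>l. cos (sqrt l * t) * \<sigma>0 l * chi x z l)"

definition uvel :: "real \<Rightarrow> real \<Rightarrow> (real \<Rightarrow> real) \<Rightarrow> real \<Rightarrow> real \<Rightarrow> real \<Rightarrow> real" where
  "uvel ls lss \<sigma>0 x z t = - deriv (\<lambda>z'. psi ls lss \<sigma>0 x z' t) z"

definition vvel :: "real \<Rightarrow> real \<Rightarrow> (real \<Rightarrow> real) \<Rightarrow> real \<Rightarrow> real \<Rightarrow> real \<Rightarrow> real" where
  "vvel ls lss \<sigma>0 x z t = (LBINT s=0..t. deriv (\<lambda>z'. psi ls lss \<sigma>0 x z' s) z)"

definition wvel :: "real \<Rightarrow> real \<Rightarrow> (real \<Rightarrow> real) \<Rightarrow> real \<Rightarrow> real \<Rightarrow> real \<Rightarrow> real" where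
  "wvel ls lss \<sigma>0 x z t = deriv (\<lambda>x'. psi ls lss \<sigma>0 x' z t) x"

definition C1_on_closed :: "real set \<Rightarrow> (real \<Rightarrow> real) \<Rightarrow> bool" where
  "C1_on_closed S f \<longleftrightarrow> (\<exists>D. (\<forall>x\<in>S. (f has_real_derivative D x) (at x within S)) \<and> continuous_on S D)"

definition side_CA :: "real \<Rightarrow> (real \<times> real) set" where
  "side_CA m = {q \<in> closure (Pset m). snd q = 1 + fst q / aa m + 1 / aa m - aa m}"
definition side_AB :: "real \<Rightarrow> (real \<times> real) set" where
  "side_AB m = {q \<in> closure (Pset m). snd q = 1 - fst q / aa m - 1 / aa m - aa m}"
definition side_BD :: "real \<Rightarrow> (real \<times> real) set" where
  "side_BD m = {q \<in> closure (Pset m). snd q = fst q / aa m + 1 / aa m + aa m - 3}"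
definition side_DC :: "real \<Rightarrow> (real \<times> real) set" where
  "side_DC m = {q \<in> closure (Pset m). snd q = - fst q / aa m - 1 / aa m + aa m - 1}"

definition Omega0 :: "real \<Rightarrow> real \<Rightarrow> (real \<times> real) set" where
  "Omega0 ls lss = (let
      SCA = (\<Union>m\<in>{ls..lss}. side_CA m); SAB = (\<Union>m\<in>{ls..lss}. side_AB m);
      SBD = (\<Union>m\<in>{ls..lss}. side_BD m); SDC = (\<Union>m\<in>{ls..lss}. side_DC m);
      D1 = interior (SCA \<inter> SDC); D2 = interior (SCA \<inter> SAB);
      D3 = interior (SAB \<inter> SBD); D4 = interior (SBD \<inter> SDC)
    in interior (Dom - (D1 \<union> D2 \<union> D3 \<union> D4)))"

definition rot :: "real \<Rightarrow> real \<times> real \<Rightarrow> real \<times> real" where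
  "rot th q = (cos th * fst q + sin th * snd q, - sin th * fst q + cos th * snd q)"

definition lipschitz_domain :: "(real \<times> real) set \<Rightarrow> bool" where
  "lipschitz_domain \<Omega> \<longleftrightarrow> open \<Omega> \<and> connected \<Omega> \<and> bounded \<Omega> \<and> \<Omega> \<noteq> {} \<and>
     (\<forall>p\<in>frontier \<Omega>. \<exists>r>0. \<exists>ang L g. lipschitz_on L UNIV (g :: real \<Rightarrow> real) \<and>
        (\<forall>q\<in>ball p r. (q \<in> \<Omega>) = (g (fst (rot ang (q - p))) < snd (rot ang (q - p)))))"

end

theory Submission
  imports Defs
begin


definition Rr :: "real \<Rightarrow> real \<Rightarrow> real" where "Rr b c = (b + sqrt (b\<^sup>2 + c)) / 2"
definition Mof :: "real \<Rightarrow> real" where "Mof r = (max 0 r)\<^sup>2 / (1 + (max 0 r)\<^sup>2)"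
definition R1 :: "real \<Rightarrow> real \<Rightarrow> real" where "R1 x z = Rr (z + 3) (-4 * (x + 1))"
definition R2 :: "real \<Rightarrow> real \<Rightarrow> real" where "R2 x z = Rr (1 - z) (4 * (x + 1))"
definition R3 :: "real \<Rightarrow> real \<Rightarrow> real" where "R3 x z = Rr (1 - z) (-4 * (x + 1))"
definition R4 :: "real \<Rightarrow> real \<Rightarrow> real" where "R4 x z = Rr (1 + z) (4 * (x + 1))"

lemma quad_upper:
  assumes q1: "1 - b - c/4 < 0" and a: "1 \<le> a"
  shows "a\<^sup>2 - b*a - c/4 < 0 \<longleftrightarrow> a < Rr b c"
    and "a\<^sup>2 - b*a - c/4 \<le> 0 \<longleftrightarrow> a \<le> Rr b c"
    and "b\<^sup>2 + c > 0" and "1 < Rr b c"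
proof -
  have "b\<^sup>2 + c = (b-2)\<^sup>2 + 4*(b + c/4 - 1)" by (simp add: algebra_simps power2_eq_square)
  then show dp: "b\<^sup>2 + c > 0" using q1 by (smt (verit) zero_le_power2)
  define S where "S = sqrt (b\<^sup>2 + c)"
  have S: "S > 0" "S\<^sup>2 = b\<^sup>2 + c" using dp by (auto simp: S_def)
  have fac: "\<And>y. y\<^sup>2 - b*y - c/4 = (y - (b+S)/2) * (y - (b-S)/2)"
    using S by (simp add: algebra_simps power2_eq_square; simp add: field_simps)
  have R: "Rr b c = (b+S)/2" by (simp add: Rr_def S_def)
  have "(1 - (b+S)/2) * (1 - (b-S)/2) < 0" using q1 fac[of 1] by simp
  then have r: "(b-S)/2 < 1" "1 < (b+S)/2" using S by (auto simp: mult_less_0_iff)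
  show "1 < Rr b c" using r R by simp
  have pos: "a - (b-S)/2 > 0" using r a by simp
  show "a\<^sup>2 - b*a - c/4 < 0 \<longleftrightarrow> a < Rr b c"
    unfolding fac R using pos by (simp add: mult_less_0_iff)
  show "a\<^sup>2 - b*a - c/4 \<le> 0 \<longleftrightarrow> a \<le> Rr b c"
    unfolding fac R using pos by (simp add: mult_le_0_iff)
qed

lemma quad_lower:
  assumes b: "b < 2" and a: "1 \<le> a"
  shows "a\<^sup>2 - b*a - c/4 > 0 \<longleftrightarrow> Rr b c < a"
    and "a\<^sup>2 - b*a - c/4 \<ge> 0 \<longleftrightarrow> Rr b c \<le> a"
    and "Rr b c > 1 \<Longrightarrow> b\<^sup>2 + c > 0"
proof -
  define S where "S = sqrt (b\<^sup>2 + c)"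
  have R: "Rr b c = (b+S)/2" by (simp add: Rr_def S_def)
  have "(a\<^sup>2 - b*a - c/4 > 0 \<longleftrightarrow> Rr b c < a) \<and> (a\<^sup>2 - b*a - c/4 \<ge> 0 \<longleftrightarrow> Rr b c \<le> a)
     \<and> (Rr b c > 1 \<longrightarrow> b\<^sup>2 + c > 0)"
  proof (cases "b\<^sup>2 + c \<ge> 0")
    case True
    have S: "S \<ge> 0" "S\<^sup>2 = b\<^sup>2 + c" using True by (auto simp: S_def)
    have fac: "a\<^sup>2 - b*a - c/4 = (a - (b+S)/2) * (a - (b-S)/2)"
      using S by (simp add: algebra_simps power2_eq_square; simp add: field_simps)
    have pos: "a - (b-S)/2 > 0" using S a b by simp
    have x: "Rr b c > 1 \<longrightarrow> b\<^sup>2 + c > 0"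
    proof
      assume "Rr b c > 1"
      then have "S > 0" using R b by simp
      then show "b\<^sup>2 + c > 0" using S by (metis S_def real_sqrt_gt_zero real_sqrt_le_0_iff linorder_not_le True order_le_less)
    qed
    show ?thesis unfolding fac R using pos x R
      by (auto simp: zero_less_mult_iff zero_le_mult_iff)
  next
    case False
    have S: "S < 0" using False by (simp add: S_def)
    have "a\<^sup>2 - b*a - c/4 = (a - b/2)\<^sup>2 - (b\<^sup>2 + c)/4" by (simp add: algebra_simps power2_eq_square)
    also have "\<dots> > 0"
    proof -
      have "0 \<le> (a - b/2)\<^sup>2" by simp
      moreover have "(b\<^sup>2 + c)/4 < 0" using False by simp
      ultimately show ?thesis by linarith
    qed
    finally have "a\<^sup>2 - b*a - c/4 > 0" .
    moreover have "Rr b c < a" using R S a b by simp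
    ultimately show ?thesis using False R S b by auto
  qed
  then show "a\<^sup>2 - b*a - c/4 > 0 \<longleftrightarrow> Rr b c < a" "a\<^sup>2 - b*a - c/4 \<ge> 0 \<longleftrightarrow> Rr b c \<le> a"
    "Rr b c > 1 \<Longrightarrow> b\<^sup>2 + c > 0" by auto
qed

definition M1 :: "real \<Rightarrow> real \<Rightarrow> real" where "M1 x z = Mof (R1 x z)"
definition M2 :: "real \<Rightarrow> real \<Rightarrow> real" where "M2 x z = Mof (R2 x z)"
definition M3 :: "real \<Rightarrow> real \<Rightarrow> real" where "M3 x z = Mof (R3 x z)"
definition M4 :: "real \<Rightarrow> real \<Rightarrow> real" where "M4 x z = Mof (R4 x z)"
definition Hi :: "real \<Rightarrow> real \<Rightarrow> real" where "Hi x z = min (M1 x z) (M2 x z)"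
definition Lo :: "real \<Rightarrow> real \<Rightarrow> real" where "Lo x z = max (M3 x z) (M4 x z)"

lemma aa_gt1: "1/2 < l \<Longrightarrow> l < 1 \<Longrightarrow> 1 < aa l"
  unfolding aa_def by (simp add: field_simps)

lemma Mof_aa: "0 < l \<Longrightarrow> l < 1 \<Longrightarrow> Mof (aa l) = l"
proof -
  assume l: "0 < l" "l < 1"
  have nn: "0 \<le> l/(1-l)" by (rule divide_nonneg_pos) (use l in auto)
  have "(aa l)\<^sup>2 = l/(1-l)" unfolding aa_def using real_sqrt_pow2[OF nn] .
  moreover have "aa l \<ge> 0" unfolding aa_def using nn by simp
  moreover have "1 + (aa l)\<^sup>2 > 0" by (simp add: add_pos_nonneg)
  ultimately show ?thesis using l unfolding Mof_def by (simp add: field_simps)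
qed

lemma aa_Mof: "0 < r \<Longrightarrow> aa (Mof r) = r"
proof -
  assume r: "0 < r"
  have p: "1 + r\<^sup>2 > 0" by (simp add: add_pos_nonneg)
  have m: "Mof r = r\<^sup>2/(1+r\<^sup>2)" using r unfolding Mof_def by simp
  have m1: "1 - Mof r = 1/(1+r\<^sup>2)" using p unfolding m by (simp add: field_simps)
  have "Mof r / (1 - Mof r) = r\<^sup>2" unfolding m1 unfolding m using p by (simp add: field_simps)
  then show ?thesis using r unfolding aa_def by simp
qed

lemma Mof_range: "0 \<le> Mof r" "Mof r < 1"
  unfolding Mof_def by (auto simp: field_simps add_pos_nonneg)

lemma Mof_pos: "0 < Mof r \<Longrightarrow> 0 < r"
  unfolding Mof_def by (cases "r \<le> 0") auto

lemma Mof_mono_pos: "0 \<le> a \<Longrightarrow> a < r \<Longrightarrow> Mof a < Mof r"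
proof -
  assume a: "0 \<le> a" "a < r"
  have "a\<^sup>2 < r\<^sup>2" using a by (simp add: power_strict_mono)
  then show ?thesis using a unfolding Mof_def by (simp add: field_simps add_pos_nonneg)
qed

lemma Mof_mono: "a \<le> r \<Longrightarrow> Mof a \<le> Mof r"
proof -
  assume a: "a \<le> r"
  have "(max 0 a)\<^sup>2 \<le> (max 0 r)\<^sup>2" using a by (simp add: power_mono)
  then show ?thesis unfolding Mof_def by (simp add: field_simps add_pos_nonneg)
qed

lemma Mof_less_iff: "0 < a \<Longrightarrow> Mof a < Mof r \<longleftrightarrow> a < r"
  by (meson Mof_mono Mof_mono_pos linorder_not_le order_less_imp_le)
lemma Mof_less_iff2: "0 < a \<Longrightarrow> Mof r < Mof a \<longleftrightarrow> r < a"
  by (smt (verit) Mof_mono Mof_mono_pos Mof_pos Mof_range(1))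
lemma Mof_le_iff: "0 < a \<Longrightarrow> Mof a \<le> Mof r \<longleftrightarrow> a \<le> r"
  using Mof_less_iff2 linorder_not_le by blast
lemma Mof_le_iff2: "0 < a \<Longrightarrow> Mof r \<le> Mof a \<longleftrightarrow> r \<le> a"
  using Mof_less_iff linorder_not_le by blast

lemma cmp_scale: "0 < (a::real) \<Longrightarrow> a*Q - a*P = - E \<Longrightarrow> (P < Q \<longleftrightarrow> E < 0) \<and> (P \<le> Q \<longleftrightarrow> E \<le> 0)"
proof -
  assume a: "0 < a" and e: "a*Q - a*P = - E"
  have "P<Q \<longleftrightarrow> a*P < a*Q" "P \<le> Q \<longleftrightarrow> a*P \<le> a*Q" using mult_less_cancel_left_pos[OF a, of P Q] mult_le_cancel_left_pos[OF a, of P Q] by simp_all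
  then show ?thesis using e by linarith
qed

lemma c1: assumes "(x,z) \<in> Dom" "1 \<le> a"
  shows "a - 3 + 1/a < z - x/a \<longleftrightarrow> a < R1 x z"
    and "a - 3 + 1/a \<le> z - x/a \<longleftrightarrow> a \<le> R1 x z"
proof -
  have d: "-1 < z" "z < 0" "-1 < x" "x < z + 1" using assms(1) by (auto simp: Dom_def)
  have q1: "1 - (z+3) - (-4*(x+1))/4 < 0" using d by simp
  have k: "a*(z - x/a) - a*(a - 3 + 1/a) = - (a\<^sup>2 - (z+3)*a - (-4*(x+1))/4)"
    using assms(2) by (simp add: field_simps power2_eq_square)
  have e1: "a - 3 + 1/a < z - x/a \<longleftrightarrow> a\<^sup>2 - (z+3)*a - (-4*(x+1))/4 < 0" and e2: "a - 3 + 1/a \<le> z - x/a \<longleftrightarrow> a\<^sup>2 - (z+3)*a - (-4*(x+1))/4 \<le> 0"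
    using cmp_scale[OF _ k] assms(2) by auto
  show "a - 3 + 1/a < z - x/a \<longleftrightarrow> a < R1 x z" "a - 3 + 1/a \<le> z - x/a \<longleftrightarrow> a \<le> R1 x z"
    unfolding e1 e2 R1_def using quad_upper[OF q1 assms(2)] by auto
qed

lemma c2: assumes "(x,z) \<in> Dom" "1 \<le> a"
  shows "z - x/a < 1 - a + 1/a \<longleftrightarrow> a < R2 x z"
    and "z - x/a \<le> 1 - a + 1/a \<longleftrightarrow> a \<le> R2 x z"
proof -
  have d: "-1 < z" "z < 0" "-1 < x" "x < z + 1" using assms(1) by (auto simp: Dom_def)
  have q1: "1 - (1-z) - (4*(x+1))/4 < 0" using d by simp
  have k: "a*(1 - a + 1/a) - a*(z - x/a) = - (a\<^sup>2 - (1-z)*a - (4*(x+1))/4)"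
    using assms(2) by (simp add: field_simps power2_eq_square)
  have e1: "z - x/a < 1 - a + 1/a \<longleftrightarrow> a\<^sup>2 - (1-z)*a - (4*(x+1))/4 < 0" and e2: "z - x/a \<le> 1 - a + 1/a \<longleftrightarrow> a\<^sup>2 - (1-z)*a - (4*(x+1))/4 \<le> 0"
    using cmp_scale[OF _ k] assms(2) by auto
  show "z - x/a < 1 - a + 1/a \<longleftrightarrow> a < R2 x z" "z - x/a \<le> 1 - a + 1/a \<longleftrightarrow> a \<le> R2 x z"
    unfolding e1 e2 R2_def using quad_upper[OF q1 assms(2)] by auto
qed

lemma c3: assumes "(x,z) \<in> Dom" "1 \<le> a"
  shows "1 - a - 1/a < z + x/a \<longleftrightarrow> R3 x z < a"
    and "1 - a - 1/a \<le> z + x/a \<longleftrightarrow> R3 x z \<le> a"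
proof -
  have d: "-1 < z" "z < 0" "-1 < x" "x < z + 1" using assms(1) by (auto simp: Dom_def)
  have b: "1 - z < 2" using d by simp
  have k: "a*(z + x/a) - a*(1 - a - 1/a) = - (-(a\<^sup>2 - (1-z)*a - (-4*(x+1))/4))"
    using assms(2) by (simp add: field_simps power2_eq_square)
  have e1: "1 - a - 1/a < z + x/a \<longleftrightarrow> a\<^sup>2 - (1-z)*a - (-4*(x+1))/4 > 0" and e2: "1 - a - 1/a \<le> z + x/a \<longleftrightarrow> a\<^sup>2 - (1-z)*a - (-4*(x+1))/4 \<ge> 0"
    using cmp_scale[OF _ k] assms(2) by auto
  show "1 - a - 1/a < z + x/a \<longleftrightarrow> R3 x z < a" "1 - a - 1/a \<le> z + x/a \<longleftrightarrow> R3 x z \<le> a"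
    unfolding e1 e2 R3_def using quad_lower[OF b assms(2)] by auto
qed

lemma c4: assumes "(x,z) \<in> Dom" "1 \<le> a"
  shows "z + x/a < a - 1 - 1/a \<longleftrightarrow> R4 x z < a"
    and "z + x/a \<le> a - 1 - 1/a \<longleftrightarrow> R4 x z \<le> a"
proof -
  have d: "-1 < z" "z < 0" "-1 < x" "x < z + 1" using assms(1) by (auto simp: Dom_def)
  have b: "1 + z < 2" using d by simp
  have k: "a*(a - 1 - 1/a) - a*(z + x/a) = - (-(a\<^sup>2 - (1+z)*a - (4*(x+1))/4))"
    using assms(2) by (simp add: field_simps power2_eq_square)
  have e1: "z + x/a < a - 1 - 1/a \<longleftrightarrow> a\<^sup>2 - (1+z)*a - (4*(x+1))/4 > 0" and e2: "z + x/a \<le> a - 1 - 1/a \<longleftrightarrow> a\<^sup>2 - (1+z)*a - (4*(x+1))/4 \<ge> 0"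
    using cmp_scale[OF _ k] assms(2) by auto
  show "z + x/a < a - 1 - 1/a \<longleftrightarrow> R4 x z < a" "z + x/a \<le> a - 1 - 1/a \<longleftrightarrow> R4 x z \<le> a"
    unfolding e1 e2 R4_def using quad_lower[OF b assms(2)] by auto
qed

lemma Pset_iff:
  assumes d: "(x,z) \<in> Dom" and l: "1/2 < l" "l < 1"
  shows "(x,z) \<in> Pset l \<longleftrightarrow> Lo x z < l \<and> l < Hi x z"
proof -
  define a where "a = aa l"
  have a1: "1 \<le> a" using aa_gt1[OF l] a_def by simp
  have la: "l = Mof a" using Mof_aa[of l] l a_def by simp
  have a0: "0 < a" using a1 by simp
  show ?thesis
    unfolding Pset_def mem_Collect_eq case_prod_conv a_def[symmetric]
    unfolding c1[OF d a1] c2[OF d a1] c3[OF d a1] c4[OF d a1] Lo_def Hi_def M1_def M2_def M3_def M4_def la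
    using Mof_less_iff[OF a0] Mof_less_iff2[OF a0] by auto
qed

definition CR :: "real \<Rightarrow> real \<Rightarrow> real \<Rightarrow> bool" where
  "CR l x z \<longleftrightarrow> aa l - 3 + 1 / aa l \<le> z - x / aa l \<and> z - x / aa l \<le> 1 - aa l + 1 / aa l
                   \<and> 1 - aa l - 1 / aa l \<le> z + x / aa l \<and> z + x / aa l \<le> aa l - 1 - 1 / aa l"

lemma CR_iff:
  assumes d: "(x,z) \<in> Dom" and l: "1/2 < l" "l < 1"
  shows "CR l x z \<longleftrightarrow> Lo x z \<le> l \<and> l \<le> Hi x z"
proof -
  define a where "a = aa l"
  have a1: "1 \<le> a" using aa_gt1[OF l] a_def by simp
  have la: "l = Mof a" using Mof_aa[of l] l a_def by simp
  have a0: "0 < a" using a1 by simp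
  show ?thesis
    unfolding CR_def a_def[symmetric]
    unfolding c1[OF d a1] c2[OF d a1] c3[OF d a1] c4[OF d a1] Lo_def Hi_def M1_def M2_def M3_def M4_def la
    using Mof_le_iff[OF a0] Mof_le_iff2[OF a0] by auto
qed

lemma convex_step:
  fixes lo hi w w' s :: real
  assumes "lo \<le> w" "w \<le> hi" "lo < w'" "w' < hi" "0 < s" "s \<le> 1"
  shows "lo < w + s*(w' - w)" "w + s*(w' - w) < hi"
proof -
  have e: "w + s*(w' - w) = (1-s)*w + s*w'" by (simp add: algebra_simps)
  have "(1-s)*lo \<le> (1-s)*w" "(1-s)*w \<le> (1-s)*hi" using assms by (simp_all add: mult_left_mono)
  moreover have "s*lo < s*w'" "s*w' < s*hi" using assms by simp_all
  ultimately show "lo < w + s*(w' - w)" "w + s*(w' - w) < hi" unfolding e by (simp_all add: algebra_simps)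
qed

lemma in_closure:
  assumes l: "1/2 < l" "l < 4/5" and cr: "CR l x z"
  shows "(x,z) \<in> closure (Pset l)"
proof -
  define a where "a = aa l"
  have a1: "1 < a" using aa_gt1[of l] l a_def by simp
  have "l/(1-l) < 4" using l by (simp add: field_simps)
  then have a2: "a < 2" unfolding a_def aa_def
    by (metis real_sqrt_four real_sqrt_less_iff)
  define c where "c = ((a-2)/2, -1/2::real)"
  define s where "s n = inverse (real (Suc n))" for n
  define y where "y n = (x,z) + s n *\<^sub>R (c - (x,z))" for n
  have s: "0 < s n" "s n \<le> 1" for n unfolding s_def by (auto simp: field_simps)
  have u: "snd (y n) - fst (y n)/a = (z - x/a) + s n * ((snd c - fst c/a) - (z - x/a))"
    and v: "snd (y n) + fst (y n)/a = (z + x/a) + s n * ((snd c + fst c/a) - (z + x/a))" for n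
    using a1 unfolding y_def by (auto simp: field_simps)
  have uc: "snd c - fst c/a = 1/a - 1" "snd c + fst c/a = -1/a" using a1 unfolding c_def by (auto simp: field_simps)
  have cr': "a - 3 + 1 / a \<le> z - x / a" "z - x / a \<le> 1 - a + 1 / a"
    "1 - a - 1 / a \<le> z + x / a" "z + x / a \<le> a - 1 - 1 / a" using cr unfolding CR_def a_def by auto
  have "y n \<in> Pset l" for n
  proof -
    have i1: "a - 3 + 1/a < 1/a - 1" "1/a - 1 < 1 - a + 1/a" using a1 a2 by simp_all
    have i2: "1 - a - 1/a < -1/a" "-1/a < a - 1 - 1/a" using a1 a2 by simp_all
    note A = convex_step[OF cr'(1,2) i1 s[of n]] and B = convex_step[OF cr'(3,4) i2 s[of n]]
    show ?thesis unfolding Pset_def a_def[symmetric] using A B u[of n] v[of n] uc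
      by (cases "y n") auto
  qed
  moreover have "y \<longlonglongrightarrow> (x,z)"
  proof -
    have "s \<longlonglongrightarrow> 0" unfolding s_def by (rule LIMSEQ_inverse_real_of_nat)
    then have "(\<lambda>n. (x,z) + s n *\<^sub>R (c - (x,z))) \<longlonglongrightarrow> (x,z) + 0 *\<^sub>R (c - (x,z))"
      by (intro tendsto_intros)
    then show ?thesis unfolding y_def by simp
  qed
  ultimately show ?thesis unfolding closure_sequential by blast
qed

lemma line1: "(x,z) \<in> Dom \<Longrightarrow> 1 \<le> R1 x z \<Longrightarrow> z - x / R1 x z = R1 x z - 3 + 1 / R1 x z"
  using c1[of x z "R1 x z"] by linarith
lemma line2: "(x,z) \<in> Dom \<Longrightarrow> 1 \<le> R2 x z \<Longrightarrow> z - x / R2 x z = 1 - R2 x z + 1 / R2 x z"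
  using c2[of x z "R2 x z"] by linarith
lemma line3: "(x,z) \<in> Dom \<Longrightarrow> 1 \<le> R3 x z \<Longrightarrow> z + x / R3 x z = 1 - R3 x z - 1 / R3 x z"
  using c3[of x z "R3 x z"] by linarith
lemma line4: "(x,z) \<in> Dom \<Longrightarrow> 1 \<le> R4 x z \<Longrightarrow> z + x / R4 x z = R4 x z - 1 - 1 / R4 x z"
  using c4[of x z "R4 x z"] by linarith

lemma Mof1: "Mof 1 = 1/2" unfolding Mof_def by simp
lemma Mof2: "Mof 2 = 4/5" unfolding Mof_def by simp

lemma R_gt1_of_M: "1/2 < Mof r \<Longrightarrow> 1 < r"
proof (rule ccontr)
  assume "1/2 < Mof r" "\<not> 1 < r"
  then show False using Mof_mono[of r 1] Mof1 by linarith
qed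

lemma R1_gt1: "(x,z) \<in> Dom \<Longrightarrow> 1 < R1 x z"
  unfolding R1_def by (rule quad_upper(4)[where a=1]) (auto simp: Dom_def)
lemma R2_gt1: "(x,z) \<in> Dom \<Longrightarrow> 1 < R2 x z"
  unfolding R2_def by (rule quad_upper(4)[where a=1]) (auto simp: Dom_def)

lemma Mof_inj: "0 < a \<Longrightarrow> 0 < b \<Longrightarrow> Mof a = Mof b \<Longrightarrow> a = b"
  by (metis Mof_less_iff linorder_neq_iff order_less_irrefl)

lemma T1: assumes d: "(x,z) \<in> Dom" and e: "M1 x z = M2 x z" shows "M1 x z = 4/5"
proof -
  have r: "R1 x z = R2 x z" using Mof_inj[OF _ _ e[unfolded M1_def M2_def]] R1_gt1[OF d] R2_gt1[OF d] by simp
  define r where "r = R1 x z"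
  have "z - x / r = r - 3 + 1 / r" "z - x / r = 1 - r + 1 / r"
    using line1[OF d] line2[OF d] R1_gt1[OF d] r unfolding r_def by auto
  then have "r = 2" by simp
  then show ?thesis unfolding M1_def r_def[symmetric] using Mof2 by simp
qed

lemma T2: assumes d: "(x,z) \<in> Dom" and e: "M3 x z = M4 x z" shows "M3 x z \<le> 1/2"
proof (rule ccontr)
  assume "\<not> M3 x z \<le> 1/2"
  then have g: "1 < R3 x z" "1 < R4 x z" using R_gt1_of_M e unfolding M3_def M4_def by auto
  have r: "R3 x z = R4 x z" using Mof_inj[OF _ _ e[unfolded M3_def M4_def]] g by simp
  define r where "r = R3 x z"
  have "z + x / r = 1 - r - 1 / r" "z + x / r = r - 1 - 1 / r"
    using line3[OF d] line4[OF d] g r unfolding r_def by auto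
  then have "r = 1" by simp
  then show False using g r_def by simp
qed

lemma V_gen:
  assumes d: "(x,z) \<in> Dom" and e: "Mof A = Mof B" and m: "1/2 < Mof A"
    and L: "1 < A \<Longrightarrow> 1 < B \<Longrightarrow> A = B \<Longrightarrow> False"
  shows False
proof -
  have g: "1 < A" "1 < B" using R_gt1_of_M m e by auto
  then show False using L Mof_inj[OF _ _ e] by simp
qed

lemma V13: assumes d: "(x,z) \<in> Dom" and e: "M1 x z = M3 x z" and m: "1/2 < M1 x z" shows False
proof (rule V_gen[OF d e[unfolded M1_def M3_def] m[unfolded M1_def]])
  assume g: "1 < R1 x z" "1 < R3 x z" "R1 x z = R3 x z"
  have "z - x / R1 x z = R1 x z - 3 + 1 / R1 x z" "z + x / R1 x z = 1 - R1 x z - 1 / R1 x z"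
    using line1[OF d] line3[OF d] g by auto
  then have "z = -1" by (simp add: field_simps)
  then show False using d by (simp add: Dom_def)
qed

lemma V14: assumes d: "(x,z) \<in> Dom" and e: "M1 x z = M4 x z" and m: "1/2 < M1 x z" shows False
proof (rule V_gen[OF d e[unfolded M1_def M4_def] m[unfolded M1_def]])
  assume g: "1 < R1 x z" "1 < R4 x z" "R1 x z = R4 x z"
  define r where "r = R1 x z"
  have h: "z - x / r = r - 3 + 1 / r" "z + x / r = r - 1 - 1 / r"
    using line1[OF d] line4[OF d] g unfolding r_def by auto
  have r0: "r \<noteq> 0" using g r_def by simp
  have "2*z = 2*r - 4" using h by simp
  moreover have "2*(x/r) = 2 - 2/r" using h by simp
  then have "x = r - 1" using r0 by (simp add: field_simps)
  ultimately have "x = z + 1" by simp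
  then show False using d by (simp add: Dom_def)
qed

lemma V23: assumes d: "(x,z) \<in> Dom" and e: "M2 x z = M3 x z" and m: "1/2 < M2 x z" shows False
proof (rule V_gen[OF d e[unfolded M2_def M3_def] m[unfolded M2_def]])
  assume g: "1 < R2 x z" "1 < R3 x z" "R2 x z = R3 x z"
  define r where "r = R2 x z"
  have h: "z - x / r = 1 - r + 1 / r" "z + x / r = 1 - r - 1 / r"
    using line2[OF d] line3[OF d] g unfolding r_def by auto
  have r0: "r \<noteq> 0" using g r_def by simp
  have "2*(x/r) = - 2/r" using h by simp
  then have "x = -1" using r0 by (simp add: field_simps)
  then show False using d by (simp add: Dom_def)
qed

lemma V24: assumes d: "(x,z) \<in> Dom" and e: "M2 x z = M4 x z" and m: "1/2 < M2 x z" shows False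
proof (rule V_gen[OF d e[unfolded M2_def M4_def] m[unfolded M2_def]])
  assume g: "1 < R2 x z" "1 < R4 x z" "R2 x z = R4 x z"
  define r where "r = R2 x z"
  have h: "z - x / r = 1 - r + 1 / r" "z + x / r = r - 1 - 1 / r"
    using line2[OF d] line4[OF d] g unfolding r_def by auto
  have "2*z = 0" using h by simp
  then show False using d by (simp add: Dom_def)
qed

lemma side1: assumes d: "(x,z) \<in> Dom" and m: "1/2 < M1 x z" "M1 x z < 4/5"
  and lh: "Lo x z \<le> M1 x z" "M1 x z \<le> Hi x z"
  shows "(x,z) \<in> side_BD (M1 x z)"
proof -
  have r: "1 < R1 x z" using R_gt1_of_M m unfolding M1_def by simp
  have a: "aa (M1 x z) = R1 x z" unfolding M1_def using aa_Mof r by simp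
  have "CR (M1 x z) x z" using CR_iff[OF d, of "M1 x z"] m lh by simp
  then have "(x,z) \<in> closure (Pset (M1 x z))" using in_closure m by simp
  moreover have "z = x / R1 x z + 1 / R1 x z + R1 x z - 3" using line1[OF d] r by simp
  ultimately show ?thesis unfolding side_BD_def a by simp
qed

lemma side2: assumes d: "(x,z) \<in> Dom" and m: "1/2 < M2 x z" "M2 x z < 4/5"
  and lh: "Lo x z \<le> M2 x z" "M2 x z \<le> Hi x z"
  shows "(x,z) \<in> side_CA (M2 x z)"
proof -
  have r: "1 < R2 x z" using R_gt1_of_M m unfolding M2_def by simp
  have a: "aa (M2 x z) = R2 x z" unfolding M2_def using aa_Mof r by simp
  have "CR (M2 x z) x z" using CR_iff[OF d, of "M2 x z"] m lh by simp
  then have "(x,z) \<in> closure (Pset (M2 x z))" using in_closure m by simp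
  moreover have "z = 1 + x / R2 x z + 1 / R2 x z - R2 x z" using line2[OF d] r by simp
  ultimately show ?thesis unfolding side_CA_def a by simp
qed

lemma side3: assumes d: "(x,z) \<in> Dom" and m: "1/2 < M3 x z" "M3 x z < 4/5"
  and lh: "Lo x z \<le> M3 x z" "M3 x z \<le> Hi x z"
  shows "(x,z) \<in> side_AB (M3 x z)"
proof -
  have r: "1 < R3 x z" using R_gt1_of_M m unfolding M3_def by simp
  have a: "aa (M3 x z) = R3 x z" unfolding M3_def using aa_Mof r by simp
  have "CR (M3 x z) x z" using CR_iff[OF d, of "M3 x z"] m lh by simp
  then have "(x,z) \<in> closure (Pset (M3 x z))" using in_closure m by simp
  moreover have "z = 1 - x / R3 x z - 1 / R3 x z - R3 x z" using line3[OF d] r by simp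
  ultimately show ?thesis unfolding side_AB_def a by simp
qed

lemma side4: assumes d: "(x,z) \<in> Dom" and m: "1/2 < M4 x z" "M4 x z < 4/5"
  and lh: "Lo x z \<le> M4 x z" "M4 x z \<le> Hi x z"
  shows "(x,z) \<in> side_DC (M4 x z)"
proof -
  have r: "1 < R4 x z" using R_gt1_of_M m unfolding M4_def by simp
  have a: "aa (M4 x z) = R4 x z" unfolding M4_def using aa_Mof r by simp
  have "CR (M4 x z) x z" using CR_iff[OF d, of "M4 x z"] m lh by simp
  then have "(x,z) \<in> closure (Pset (M4 x z))" using in_closure m by simp
  moreover have "z = - x / R4 x z - 1 / R4 x z + R4 x z - 1" using line4[OF d] r by simp
  ultimately show ?thesis unfolding side_DC_def a by simp
qed

definition LN :: "real \<Rightarrow> real \<Rightarrow> (real \<times> real) set" where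
  "LN al be = {(x,z). z + al * x = be}"

lemma LN_negligible: "negligible (LN al be)"
proof -
  have "LN al be = {q. (al, 1) \<bullet> q = be}" unfolding LN_def by (auto simp: algebra_simps)
  moreover have "(al, 1::real) \<noteq> 0" by (simp add: zero_prod_def)
  ultimately show ?thesis using negligible_hyperplane[of "(al, 1::real)" be] by simp
qed

definition NN :: "real \<Rightarrow> (real \<times> real) set" where
  "NN c = LN (-1/aa c) (aa c - 3 + 1/aa c) \<union> LN (-1/aa c) (1 - aa c + 1/aa c)
        \<union> LN (1/aa c) (1 - aa c - 1/aa c) \<union> LN (1/aa c) (aa c - 1 - 1/aa c)"

lemma NN_negligible: "negligible (NN c)"
  unfolding NN_def by (intro negligible_Un LN_negligible)

lemma NN_mem:
  assumes d: "(x,z) \<in> Dom" and c: "1/2 < c" "c < 1"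
    and e: "M1 x z = c \<or> M2 x z = c \<or> M3 x z = c \<or> M4 x z = c"
  shows "(x,z) \<in> NN c"
proof -
  have g: "1/2 < M x z \<Longrightarrow> M x z = c \<Longrightarrow> M x z = Mof (R x z) \<Longrightarrow> aa c = R x z \<and> 1 < R x z" for M R
    using R_gt1_of_M aa_Mof by (metis less_trans zero_less_one)
  show ?thesis using e
  proof (elim disjE)
    assume "M1 x z = c"
    then have "aa c = R1 x z" "1 < R1 x z" using g[of M1 R1] c M1_def by auto
    then show ?thesis using line1[OF d] unfolding NN_def LN_def by (auto simp: algebra_simps)
  next
    assume "M2 x z = c"
    then have "aa c = R2 x z" "1 < R2 x z" using g[of M2 R2] c M2_def by auto
    then show ?thesis using line2[OF d] unfolding NN_def LN_def by (auto simp: algebra_simps)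
  next
    assume "M3 x z = c"
    then have "aa c = R3 x z" "1 < R3 x z" using g[of M3 R3] c M3_def by auto
    then show ?thesis using line3[OF d] unfolding NN_def LN_def by (auto simp: algebra_simps)
  next
    assume "M4 x z = c"
    then have "aa c = R4 x z" "1 < R4 x z" using g[of M4 R4] c M4_def by auto
    then show ?thesis using line4[OF d] unfolding NN_def LN_def by (auto simp: algebra_simps)
  qed
qed



definition FF :: "(real \<Rightarrow> real) \<Rightarrow> real \<Rightarrow> real \<Rightarrow> real" where
  "FF \<sigma> t l = cos (sqrt l * t) * \<sigma> l"
definition Phi :: "real \<Rightarrow> (real \<Rightarrow> real) \<Rightarrow> real \<Rightarrow> real \<Rightarrow> real" where
  "Phi ls \<sigma> t m = integral {ls..m} (FF \<sigma> t)"
definition cl :: "real \<Rightarrow> real \<Rightarrow> real \<Rightarrow> real" where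
  "cl ls lss m = max ls (min lss m)"

lemma int_formula:
  fixes f :: "real \<Rightarrow> real"
  assumes "ls \<le> lss" and f: "continuous_on {ls..lss} f"
  shows "integral ({lo<..<hi} \<inter> {ls..lss}) f
       = integral {ls..cl ls lss hi} f - integral {ls..cl ls lss (min lo hi)} f"
proof -
  define c where "c = cl ls lss (min lo hi)"
  define d where "d = cl ls lss hi"
  have cd: "ls \<le> c" "c \<le> d" "d \<le> lss" using assms(1) unfolding c_def d_def cl_def by auto
  have sub1: "({lo<..<hi} \<inter> {ls..lss}) - {c..d} \<subseteq> {c,d}"
    using assms(1) unfolding c_def d_def cl_def by (auto simp: min_def max_def split: if_splits)
  have sub2: "{c..d} - ({lo<..<hi} \<inter> {ls..lss}) \<subseteq> {c,d}"
    using assms(1) unfolding c_def d_def cl_def by (auto simp: min_def max_def split: if_splits)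
  have "integral ({lo<..<hi} \<inter> {ls..lss}) f = integral {c..d} f"
    by (rule integral_spike_set; rule negligible_subset[of "{c,d}"]) (use sub1 sub2 in auto)
  moreover have "integral {ls..c} f + integral {c..d} f = integral {ls..d} f"
    by (rule Henstock_Kurzweil_Integration.integral_combine[OF cd(1,2)])
       (rule integrable_continuous_interval, rule continuous_on_subset[OF f], use cd in auto)
  ultimately show ?thesis unfolding c_def d_def by simp
qed

lemma FF_cont: "continuous_on S \<sigma> \<Longrightarrow> continuous_on S (FF \<sigma> t)"
  unfolding FF_def by (intro continuous_intros) auto

lemma psi_formula:
  assumes d: "(x,z) \<in> Dom" and l: "1/2 < ls" "ls \<le> lss" "lss < 1"
    and \<sigma>: "continuous_on {ls..lss} \<sigma>"
  shows "psi ls lss \<sigma> x z t = Phi ls \<sigma> t (cl ls lss (Hi x z)) - Phi ls \<sigma> t (cl ls lss (min (Lo x z) (Hi x z)))"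
proof -
  have "psi ls lss \<sigma> x z t = integral {ls..lss} (\<lambda>l. if l \<in> {Lo x z<..<Hi x z} then FF \<sigma> t l else 0)"
    unfolding psi_def
  proof (rule integral_cong)
    fix l assume "l \<in> {ls..lss}"
    then have l': "1/2 < l" "l < 1" using l by auto
    show "cos (sqrt l * t) * \<sigma> l * chi x z l = (if l \<in> {Lo x z<..<Hi x z} then FF \<sigma> t l else 0)"
      unfolding chi_def FF_def using Pset_iff[OF d l'] d by (auto simp: indicator_def)
  qed
  also have "\<dots> = integral ({Lo x z<..<Hi x z} \<inter> {ls..lss}) (FF \<sigma> t)"
    by (rule integral_restrict_Int)
  also have "\<dots> = Phi ls \<sigma> t (cl ls lss (Hi x z)) - Phi ls \<sigma> t (cl ls lss (min (Lo x z) (Hi x z)))"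
    unfolding Phi_def by (rule int_formula[OF l(2) FF_cont[OF \<sigma>]])
  finally show ?thesis .
qed

lemma Phi_deriv:
  assumes \<sigma>: "continuous_on {ls..lss} \<sigma>" and m: "ls < m" "m < lss"
  shows "(Phi ls \<sigma> t has_real_derivative FF \<sigma> t m) (at m)"
proof -
  have "(Phi ls \<sigma> t has_real_derivative FF \<sigma> t m) (at m within {ls..lss})"
    unfolding Phi_def by (rule integral_has_real_derivative[OF FF_cont[OF \<sigma>]]) (use m in auto)
  then show ?thesis using at_within_Icc_at[OF m] by simp
qed

lemma Rr_deriv:
  assumes "(b has_real_derivative b') (at y)" "(c has_real_derivative c') (at y)" "(b y)\<^sup>2 + c y > 0"
  shows "((\<lambda>y. Rr (b y) (c y)) has_real_derivative ((b' + (2*b y*b' + c')/(2* sqrt((b y)\<^sup>2 + c y)))/2)) (at y)"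
proof -
  have p: "sqrt ((b y)\<^sup>2 + c y) > 0" using assms(3) by simp
  show ?thesis
  unfolding Rr_def using assms p
  by (auto intro!: derivative_eq_intros simp: power2_eq_square field_simps inverse_eq_divide)
qed

lemma Mof_deriv:
  assumes r: "0 < r" shows "(Mof has_real_derivative (2*r/(1+r\<^sup>2)\<^sup>2)) (at r)"
proof -
  have p: "1 + r\<^sup>2 \<noteq> 0" by (smt (verit) zero_le_power2)
  have "((\<lambda>r. r\<^sup>2/(1+r\<^sup>2)) has_real_derivative (2*r/(1+r\<^sup>2)\<^sup>2)) (at r)"
    using p by (auto intro!: derivative_eq_intros simp: field_simps power2_eq_square)
  then show ?thesis
    by (rule has_field_derivative_transform_within_open[where S="{0<..}"]) (use r in \<open>auto simp: Mof_def\<close>)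
qed

lemma M_slices:
  fixes b0 \<beta> c0 \<gamma> x z :: real
  assumes \<beta>: "\<beta>\<^sup>2 = 1" and \<gamma>: "\<gamma>\<^sup>2 = 16"
    and disc: "(b0 + \<beta>*z)\<^sup>2 + (c0 + \<gamma>*x) > 0" and R: "Rr (b0 + \<beta>*z) (c0 + \<gamma>*x) > 0"
  shows "\<exists>Dz Dx. ((\<lambda>z'. Mof (Rr (b0 + \<beta>*z') (c0 + \<gamma>*x))) has_real_derivative Dz) (at z)
     \<and> ((\<lambda>x'. Mof (Rr (b0 + \<beta>*z) (c0 + \<gamma>*x'))) has_real_derivative Dx) (at x)
     \<and> Dx\<^sup>2 * Mof (Rr (b0 + \<beta>*z) (c0 + \<gamma>*x)) = Dz\<^sup>2 * (1 - Mof (Rr (b0 + \<beta>*z) (c0 + \<gamma>*x)))"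
proof -
  define b where "b = b0 + \<beta>*z"
  define c where "c = c0 + \<gamma>*x"
  define S where "S = sqrt (b\<^sup>2 + c)"
  define r where "r = Rr b c"
  have S: "S > 0" "S\<^sup>2 = b\<^sup>2 + c" using disc unfolding S_def b_def c_def by auto
  have rr: "r = (b + S)/2" unfolding r_def Rr_def S_def by simp
  have r0: "r > 0" using R unfolding r_def b_def c_def .
  define D where "D = 2*r/(1+r\<^sup>2)\<^sup>2"
  have dz: "((\<lambda>z'. Rr (b0 + \<beta>*z') c) has_real_derivative ((\<beta> + (2*b*\<beta> + 0)/(2* S))/2)) (at z)"
  proof -
    have bd: "((\<lambda>z'. b0 + \<beta>*z') has_real_derivative \<beta>) (at z)" by (auto intro!: derivative_eq_intros)
    show ?thesis using Rr_deriv[OF bd DERIV_const] disc by (simp add: b_def c_def S_def)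
  qed
  have dx: "((\<lambda>x'. Rr b (c0 + \<gamma>*x')) has_real_derivative ((0 + (2*b*0 + \<gamma>)/(2* S))/2)) (at x)"
  proof -
    have cd: "((\<lambda>x'. c0 + \<gamma>*x') has_real_derivative \<gamma>) (at x)" by (auto intro!: derivative_eq_intros)
    show ?thesis using Rr_deriv[OF DERIV_const cd] disc by (simp add: b_def c_def S_def)
  qed
  have Dm: "(Mof has_real_derivative D) (at r)" unfolding D_def by (rule Mof_deriv[OF r0])
  have z': "((\<lambda>z'. Mof (Rr (b0 + \<beta>*z') c)) has_real_derivative D * ((\<beta> + (2*b*\<beta> + 0)/(2* S))/2)) (at z)"
    using DERIV_chain2[OF _ dz, of Mof D] Dm unfolding r_def b_def by simp
  have x': "((\<lambda>x'. Mof (Rr b (c0 + \<gamma>*x'))) has_real_derivative D * ((0 + (2*b*0 + \<gamma>)/(2* S))/2)) (at x)"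
    using DERIV_chain2[OF _ dx, of Mof D] Dm unfolding r_def c_def by simp
  have m: "Mof r = r\<^sup>2/(1+r\<^sup>2)" using r0 unfolding Mof_def by simp
  have p: "1 + r\<^sup>2 > 0" by (smt (verit) zero_le_power2)
  have rel: "(D * ((0 + (2*b*0 + \<gamma>)/(2* S))/2))\<^sup>2 * Mof r = (D * ((\<beta> + (2*b*\<beta> + 0)/(2* S))/2))\<^sup>2 * (1 - Mof r)"
  proof -
    have e1: "(\<beta> + (2*b*\<beta> + 0)/(2* S))/2 = \<beta> * r / S" using S rr by (simp add: field_simps)
    have e2: "(0 + (2*b*0 + \<gamma>)/(2* S))/2 = \<gamma>/(4* S)" using S by (simp add: field_simps)
    have "(D * (\<gamma>/(4* S)))\<^sup>2 * (r\<^sup>2/(1+r\<^sup>2)) = (D * (\<beta> * r / S))\<^sup>2 * (1 - r\<^sup>2/(1+r\<^sup>2))"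
    proof -
      have S0: "S \<noteq> 0" "1 + r\<^sup>2 \<noteq> 0" using S(1) p by auto
      have A: "(D * (\<gamma>/(4*S)))\<^sup>2 * (r\<^sup>2/(1+r\<^sup>2)) = D\<^sup>2 * r\<^sup>2 / (S\<^sup>2 * (1+r\<^sup>2))"
        using S0 \<gamma> by (simp add: power_mult_distrib power_divide field_simps)
      have B: "(D * (\<beta> * r / S))\<^sup>2 * (1 - r\<^sup>2/(1+r\<^sup>2)) = D\<^sup>2 * r\<^sup>2 / (S\<^sup>2 * (1+r\<^sup>2))"
        using S0 \<beta> by (simp add: power_mult_distrib power_divide field_simps)
      show ?thesis using A B by simp
    qed
    then show ?thesis unfolding e1 e2 m .
  qed
  show ?thesis using z' x' rel unfolding b_def c_def r_def by blast
qed

definition slices :: "(real \<Rightarrow> real \<Rightarrow> real) \<Rightarrow> real \<Rightarrow> real \<Rightarrow> bool" where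
  "slices M x z \<longleftrightarrow> (\<exists>Dz Dx. ((\<lambda>z'. M x z') has_real_derivative Dz) (at z)
     \<and> ((\<lambda>x'. M x' z) has_real_derivative Dx) (at x)
     \<and> Dx\<^sup>2 * M x z = Dz\<^sup>2 * (1 - M x z))"

lemma slices_wrap:
  assumes "M = (\<lambda>x z. Mof (Rr (bb + \<beta>*z) (cc + \<gamma>*x)))" "\<beta>\<^sup>2 = 1" "\<gamma>\<^sup>2 = 16"
    "(bb + \<beta>*z)\<^sup>2 + (cc + \<gamma>*x) > 0" "Rr (bb + \<beta>*z) (cc + \<gamma>*x) > 0"
  shows "slices M x z"
  unfolding slices_def assms(1) using M_slices[of \<beta> \<gamma> bb z cc x, OF assms(2-5)] by simp

lemma slices1: assumes d: "(x,z) \<in> Dom" shows "slices M1 x z"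
proof (rule slices_wrap[where bb=3 and \<beta>=1 and cc="-4" and \<gamma>="-4"])
  show "M1 = (\<lambda>x z. Mof (Rr (3 + 1*z) (-4 + -4*x)))" by (simp add: fun_eq_iff M1_def R1_def algebra_simps)
  have q: "1 - (3 + 1*z) - (-4 + -4*x)/4 < 0" using d by (simp add: Dom_def)
  show "(3 + 1*z)\<^sup>2 + (-4 + -4*x) > 0" using quad_upper(3)[OF q, of 1] by simp
  show "Rr (3 + 1*z) (-4 + -4*x) > 0" using quad_upper(4)[OF q, of 1] by simp
qed auto

lemma slices2: assumes d: "(x,z) \<in> Dom" shows "slices M2 x z"
proof (rule slices_wrap[where bb=1 and \<beta>="-1" and cc="4" and \<gamma>="4"])
  show "M2 = (\<lambda>x z. Mof (Rr (1 + -1*z) (4 + 4*x)))" by (simp add: fun_eq_iff M2_def R2_def algebra_simps)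
  have q: "1 - (1 + -1*z) - (4 + 4*x)/4 < 0" using d by (simp add: Dom_def)
  show "(1 + -1*z)\<^sup>2 + (4 + 4*x) > 0" using quad_upper(3)[OF q, of 1] by simp
  show "Rr (1 + -1*z) (4 + 4*x) > 0" using quad_upper(4)[OF q, of 1] by simp
qed auto

lemma slices3: assumes d: "(x,z) \<in> Dom" and m: "1/2 < M3 x z" shows "slices M3 x z"
proof (rule slices_wrap[where bb=1 and \<beta>="-1" and cc="-4" and \<gamma>="-4"])
  show e: "M3 = (\<lambda>x z. Mof (Rr (1 + -1*z) (-4 + -4*x)))" by (simp add: fun_eq_iff M3_def R3_def algebra_simps)
  have r: "1 < Rr (1 + -1*z) (-4 + -4*x)" using R_gt1_of_M m e by metis
  have b: "1 + -1*z < 2" using d by (simp add: Dom_def)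
  show "(1 + -1*z)\<^sup>2 + (-4 + -4*x) > 0" using quad_lower(3)[OF b order_refl r] .
  show "Rr (1 + -1*z) (-4 + -4*x) > 0" using r by simp
qed auto

lemma slices4: assumes d: "(x,z) \<in> Dom" and m: "1/2 < M4 x z" shows "slices M4 x z"
proof (rule slices_wrap[where bb=1 and \<beta>="1" and cc="4" and \<gamma>="4"])
  show e: "M4 = (\<lambda>x z. Mof (Rr (1 + 1*z) (4 + 4*x)))" by (simp add: fun_eq_iff M4_def R4_def algebra_simps)
  have r: "1 < Rr (1 + 1*z) (4 + 4*x)" using R_gt1_of_M m e by metis
  have b: "1 + 1*z < 2" using d by (simp add: Dom_def)
  show "(1 + 1*z)\<^sup>2 + (4 + 4*x) > 0" using quad_lower(3)[OF b order_refl r] .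
  show "Rr (1 + 1*z) (4 + 4*x) > 0" using r by simp
qed auto

definition EE :: "real \<Rightarrow> real \<Rightarrow> (real \<Rightarrow> real) \<Rightarrow> real \<Rightarrow> real \<Rightarrow> real \<Rightarrow> real" where
  "EE ls lss \<sigma> x z t = (uvel ls lss \<sigma> x z t)\<^sup>2 + (vvel ls lss \<sigma> x z t)\<^sup>2 + (wvel ls lss \<sigma> x z t)\<^sup>2"

lemma ball_slice_z: "z' \<in> ball z0 r \<Longrightarrow> (x0, z') \<in> ball (x0, z0) r"
  by (simp add: dist_Pair_Pair dist_commute)
lemma ball_slice_x: "x' \<in> ball x0 r \<Longrightarrow> (x', z0) \<in> ball (x0, z0) r"
  by (simp add: dist_Pair_Pair dist_commute)

lemma deriv_slice_z:
  assumes r: "0 < r" and eq: "\<forall>z'\<in>ball z0 r. \<forall>t. psi ls lss \<sigma> x0 z' t = G z' t"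
    and d: "\<And>t. ((\<lambda>z. G z t) has_real_derivative D t) (at z0)"
  shows "deriv (\<lambda>z'. psi ls lss \<sigma> x0 z' t) z0 = D t"
proof (rule DERIV_imp_deriv, rule has_field_derivative_transform_within_open[OF d[of t] open_ball])
  show "z0 \<in> ball z0 r" using r by simp
  fix z' assume "z' \<in> ball z0 r"
  then show "G z' t = psi ls lss \<sigma> x0 z' t" using eq by simp
qed

lemma deriv_slice_x:
  assumes r: "0 < r" and eq: "\<forall>x'\<in>ball x0 r. \<forall>t. psi ls lss \<sigma> x' z0 t = G x' t"
    and d: "\<And>t. ((\<lambda>x. G x t) has_real_derivative D t) (at x0)"
  shows "deriv (\<lambda>x'. psi ls lss \<sigma> x' z0 t) x0 = D t"
proof (rule DERIV_imp_deriv, rule has_field_derivative_transform_within_open[OF d[of t] open_ball])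
  show "x0 \<in> ball x0 r" using r by simp
  fix x' assume "x' \<in> ball x0 r"
  then show "G x' t = psi ls lss \<sigma> x' z0 t" using eq by simp
qed

lemma energy_const:
  assumes r: "0 < r" and eq: "\<forall>q\<in>ball (x0,z0) r. \<forall>t. psi ls lss \<sigma> (fst q) (snd q) t = C t"
  shows "EE ls lss \<sigma> x0 z0 t = 0"
proof -
  have dz: "deriv (\<lambda>z'. psi ls lss \<sigma> x0 z' s) z0 = 0" for s
    by (rule deriv_slice_z[OF r, where G="\<lambda>_ t. C t"]) (use eq ball_slice_z in fastforce)+
  have dx: "deriv (\<lambda>x'. psi ls lss \<sigma> x' z0 s) x0 = 0" for s
    by (rule deriv_slice_x[OF r, where G="\<lambda>_ t. C t"]) (use eq ball_slice_x in fastforce)+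
  show ?thesis unfolding EE_def uvel_def vvel_def wvel_def dz dx by simp
qed

lemma energy_active:
  assumes r: "0 < r"
    and eq: "\<forall>q\<in>ball (x0,z0) r. \<forall>t. psi ls lss \<sigma> (fst q) (snd q) t = \<epsilon> * Phi ls \<sigma> t (M (fst q) (snd q)) + C t"
    and \<epsilon>: "\<epsilon>\<^sup>2 = 1" and m: "ls < M x0 z0" "M x0 z0 < lss" "0 < ls"
    and \<sigma>: "continuous_on {ls..lss} \<sigma>" and sl: "slices M x0 z0"
  shows "EE ls lss \<sigma> x0 z0 t1 = EE ls lss \<sigma> x0 z0 t2"
proof -
  define m where "m = M x0 z0"
  obtain Dz Dx where Dz: "((\<lambda>z'. M x0 z') has_real_derivative Dz) (at z0)"
    and Dx: "((\<lambda>x'. M x' z0) has_real_derivative Dx) (at x0)" and rel: "Dx\<^sup>2 * m = Dz\<^sup>2 * (1 - m)"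
    using sl unfolding slices_def m_def by blast
  have m0: "0 < m" using m m_def by simp
  have PD: "(Phi ls \<sigma> t has_real_derivative FF \<sigma> t m) (at m)" for t
    using Phi_deriv[OF \<sigma>] m unfolding m_def by simp
  have gz: "((\<lambda>z. \<epsilon> * Phi ls \<sigma> t (M x0 z) + C t) has_real_derivative \<epsilon> * (FF \<sigma> t m * Dz)) (at z0)" for t
  proof -
    have "((\<lambda>z. Phi ls \<sigma> t (M x0 z)) has_real_derivative FF \<sigma> t m * Dz) (at z0)"
      using DERIV_chain2[OF PD[of t, unfolded m_def] Dz] unfolding m_def .
    then show ?thesis by (auto intro!: derivative_eq_intros)
  qed
  have gx: "((\<lambda>x. \<epsilon> * Phi ls \<sigma> t (M x z0) + C t) has_real_derivative \<epsilon> * (FF \<sigma> t m * Dx)) (at x0)" for t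
  proof -
    have "((\<lambda>x. Phi ls \<sigma> t (M x z0)) has_real_derivative FF \<sigma> t m * Dx) (at x0)"
      using DERIV_chain2[OF PD[of t, unfolded m_def] Dx] unfolding m_def .
    then show ?thesis by (auto intro!: derivative_eq_intros)
  qed
  have dz: "deriv (\<lambda>z'. psi ls lss \<sigma> x0 z' s) z0 = \<epsilon> * (FF \<sigma> s m * Dz)" for s
    by (rule deriv_slice_z[OF r, where G="\<lambda>z t. \<epsilon> * Phi ls \<sigma> t (M x0 z) + C t"]) (use eq gz ball_slice_z in fastforce)+
  have dx: "deriv (\<lambda>x'. psi ls lss \<sigma> x' z0 s) x0 = \<epsilon> * (FF \<sigma> s m * Dx)" for s
    by (rule deriv_slice_x[OF r, where G="\<lambda>x t. \<epsilon> * Phi ls \<sigma> t (M x z0) + C t"]) (use eq gx ball_slice_x in fastforce)+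
  define sm where "sm = sqrt m"
  have sm: "0 < sm" "sm\<^sup>2 = m" using m0 unfolding sm_def by auto
  have v: "vvel ls lss \<sigma> x0 z0 t = \<epsilon> * \<sigma> m * Dz * (sin (sm * t) / sm)" for t
  proof -
    have "vvel ls lss \<sigma> x0 z0 t = (LBINT s=0..t. \<epsilon> * \<sigma> m * Dz * cos (sm * s))"
      unfolding vvel_def dz FF_def sm_def by (simp add: algebra_simps)
    also have "\<dots> = \<epsilon> * \<sigma> m * Dz * (sin (sm * t) / sm) - \<epsilon> * \<sigma> m * Dz * (sin (sm * 0) / sm)"
    proof (subst zero_ereal_def, rule interval_integral_FTC_finite)
      show "continuous_on {min 0 t..max 0 t} (\<lambda>s. \<epsilon> * \<sigma> m * Dz * cos (sm * s))"
        by (intro continuous_intros)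
      fix s
      have "((\<lambda>s. \<epsilon> * \<sigma> m * Dz * (sin (sm * s) / sm)) has_real_derivative \<epsilon> * \<sigma> m * Dz * cos (sm * s)) (at s)"
        using sm by (auto intro!: derivative_eq_intros)
      then show "((\<lambda>s. \<epsilon> * \<sigma> m * Dz * (sin (sm * s) / sm)) has_vector_derivative \<epsilon> * \<sigma> m * Dz * cos (sm * s))
          (at s within {min 0 t..max 0 t})"
        by (simp add: has_real_derivative_iff_has_vector_derivative has_vector_derivative_at_within)
    qed
    finally show ?thesis by simp
  qed
  have E: "EE ls lss \<sigma> x0 z0 t = (\<sigma> m)\<^sup>2 * Dz\<^sup>2 / m" for t
  proof -
    have E0: "EE ls lss \<sigma> x0 z0 t = (\<epsilon> * (cos (sm * t) * \<sigma> m * Dz))\<^sup>2 + (\<epsilon> * \<sigma> m * Dz * (sin (sm * t) / sm))\<^sup>2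
        + (\<epsilon> * (cos (sm * t) * \<sigma> m * Dx))\<^sup>2"
      unfolding EE_def uvel_def wvel_def dz dx v FF_def sm_def by (simp add: algebra_simps)
    define cc where "cc = cos (sm * t)"
    define ss where "ss = sin (sm * t)"
    have cs: "cc\<^sup>2 + ss\<^sup>2 = 1" unfolding cc_def ss_def by simp
    have E1: "EE ls lss \<sigma> x0 z0 t = (\<epsilon> * (cc * \<sigma> m * Dz))\<^sup>2 + (\<epsilon> * \<sigma> m * Dz * (ss / sm))\<^sup>2
        + (\<epsilon> * (cc * \<sigma> m * Dx))\<^sup>2" unfolding E0 cc_def ss_def ..
    have "m * EE ls lss \<sigma> x0 z0 t = (\<sigma> m)\<^sup>2 * Dz\<^sup>2 * (cc\<^sup>2 + ss\<^sup>2)"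
    proof -
      have "m * EE ls lss \<sigma> x0 z0 t = \<epsilon>\<^sup>2 * (\<sigma> m)\<^sup>2 * (cc\<^sup>2 * (Dz\<^sup>2 * m) + ss\<^sup>2 * (Dz\<^sup>2 * m / sm\<^sup>2) + cc\<^sup>2 * (Dx\<^sup>2 * m))"
        unfolding E1 by (simp add: power_mult_distrib power_divide algebra_simps)
      also have "\<dots> = (\<sigma> m)\<^sup>2 * Dz\<^sup>2 * (cc\<^sup>2 + ss\<^sup>2)"
        unfolding rel \<epsilon> sm(2) using m0 by (simp add: algebra_simps)
      finally show ?thesis .
    qed
    then have "m * EE ls lss \<sigma> x0 z0 t = (\<sigma> m)\<^sup>2 * Dz\<^sup>2" unfolding cs by simp
    then show ?thesis using m0 by (simp add: field_simps)
  qed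
  show ?thesis using E[of t1] E[of t2] by simp
qed

lemma ev_less:
  fixes f g :: "real \<times> real \<Rightarrow> real"
  assumes "isCont f p" "isCont g p" "f p < g p"
  shows "eventually (\<lambda>q. f q < g q) (nhds p)"
proof -
  have "isCont (\<lambda>q. g q - f q) p" using assms by (intro continuous_intros)
  then have "((\<lambda>q. g q - f q) \<longlongrightarrow> g p - f p) (nhds p)"
    unfolding isCont_def using tendsto_at_iff_tendsto_nhds[of "\<lambda>q. g q - f q" p] by simp
  then have "eventually (\<lambda>q. 0 < g q - f q) (nhds p)" by (rule order_tendstoD(1)) (use assms in simp)
  then show ?thesis by (rule eventually_mono) simp
qed

lemma ev_lessc:
  fixes f :: "real \<times> real \<Rightarrow> real"
  assumes "isCont f p" shows "f p < c \<Longrightarrow> eventually (\<lambda>q. f q < c) (nhds p)"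
    and "c < f p \<Longrightarrow> eventually (\<lambda>q. c < f q) (nhds p)"
  using ev_less[OF assms continuous_const] ev_less[OF continuous_const assms] by auto

locale four =
  fixes h1 h2 h3 h4 :: "real \<times> real \<Rightarrow> real" and p :: "real \<times> real" and ls lss :: real
  assumes c1: "isCont h1 p" and c2: "isCont h2 p" and c3: "isCont h3 p" and c4: "isCont h4 p"
    and lss: "ls < lss"
    and T1: "h1 p = h2 p \<Longrightarrow> lss < h1 p"
    and T2: "h3 p = h4 p \<Longrightarrow> h3 p < ls"
begin

lemma locH:
  assumes "ls < min (h1 p) (h2 p)" "min (h1 p) (h2 p) < lss"
  shows "\<exists>h\<in>{h1,h2}. ls < h p \<and> h p < lss \<and> eventually (\<lambda>q. min (h1 q) (h2 q) = h q \<and> ls < h q \<and> h q < lss) (nhds p)"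
proof (cases "h1 p < h2 p")
  case True
  then have "eventually (\<lambda>q. h1 q < h2 q \<and> ls < h1 q \<and> h1 q < lss) (nhds p)"
    using assms ev_less[OF c1 c2] ev_lessc(1)[OF c1, of lss] ev_lessc(2)[OF c1, of ls] by (auto intro!: eventually_conj)
  then show ?thesis using assms True by (auto elim!: eventually_mono)
next
  case False
  then have F: "h2 p < h1 p" using T1 assms by force
  then have "eventually (\<lambda>q. h2 q < h1 q \<and> ls < h2 q \<and> h2 q < lss) (nhds p)"
    using assms ev_less[OF c2 c1] ev_lessc(1)[OF c2, of lss] ev_lessc(2)[OF c2, of ls] by (auto intro!: eventually_conj)
  then show ?thesis using assms F
    by (intro bexI[of _ h2]) (auto elim!: eventually_mono)
qed

lemma locL:
  assumes "ls < max (h3 p) (h4 p)" "max (h3 p) (h4 p) < lss"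
  shows "\<exists>h\<in>{h3,h4}. ls < h p \<and> h p < lss \<and> eventually (\<lambda>q. max (h3 q) (h4 q) = h q \<and> ls < h q \<and> h q < lss) (nhds p)"
proof (cases "h4 p < h3 p")
  case True
  then have "eventually (\<lambda>q. h4 q < h3 q \<and> ls < h3 q \<and> h3 q < lss) (nhds p)"
    using assms ev_less[OF c4 c3] ev_lessc(1)[OF c3, of lss] ev_lessc(2)[OF c3, of ls] by (auto intro!: eventually_conj)
  then show ?thesis using assms True by (auto elim!: eventually_mono)
next
  case False
  then have F: "h3 p < h4 p" using T2 assms by force
  then have "eventually (\<lambda>q. h3 q < h4 q \<and> ls < h4 q \<and> h4 q < lss) (nhds p)"
    using assms ev_less[OF c3 c4] ev_lessc(1)[OF c4, of lss] ev_lessc(2)[OF c4, of ls] by (auto intro!: eventually_conj)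
  then show ?thesis using assms F
    by (intro bexI[of _ h4]) (auto elim!: eventually_mono)
qed


definition AA where "AA q = cl ls lss (min (h1 q) (h2 q))"
definition BB where "BB q = cl ls lss (min (max (h3 q) (h4 q)) (min (h1 q) (h2 q)))"

lemma evH_lo: "min (h1 p) (h2 p) < ls \<Longrightarrow> eventually (\<lambda>q. min (h1 q) (h2 q) < ls) (nhds p)"
proof -
  assume "min (h1 p) (h2 p) < ls"
  then have "h1 p < ls \<or> h2 p < ls" by auto
  then show ?thesis
    using ev_lessc(1)[OF c1, of ls] ev_lessc(1)[OF c2, of ls] by (auto elim!: eventually_mono)
qed
lemma evH_hi: "lss < min (h1 p) (h2 p) \<Longrightarrow> eventually (\<lambda>q. lss < min (h1 q) (h2 q)) (nhds p)"
  using ev_lessc(2)[OF c1, of lss] ev_lessc(2)[OF c2, of lss] by (auto intro!: eventually_conj)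
lemma evL_lo: "max (h3 p) (h4 p) < ls \<Longrightarrow> eventually (\<lambda>q. max (h3 q) (h4 q) < ls) (nhds p)"
  using ev_lessc(1)[OF c3, of ls] ev_lessc(1)[OF c4, of ls] by (auto intro!: eventually_conj)
lemma evL_hi: "lss < max (h3 p) (h4 p) \<Longrightarrow> eventually (\<lambda>q. lss < max (h3 q) (h4 q)) (nhds p)"
proof -
  assume "lss < max (h3 p) (h4 p)"
  then have "lss < h3 p \<or> lss < h4 p" by auto
  then show ?thesis
    using ev_lessc(2)[OF c3, of lss] ev_lessc(2)[OF c4, of lss] by (auto elim!: eventually_mono)
qed

lemma main_cases:
  assumes nz: "\<forall>h\<in>{h1,h2,h3,h4}. h p \<noteq> ls \<and> h p \<noteq> lss"
    and V: "ls < min (h1 p) (h2 p) \<Longrightarrow> min (h1 p) (h2 p) < lss \<Longrightarrow> max (h3 p) (h4 p) \<noteq> min (h1 p) (h2 p)"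
  shows "eventually (\<lambda>q. AA q = AA p \<and> BB q = BB p) (nhds p) \<or>
    (\<exists>h\<in>{h1,h2}. ls < h p \<and> h p < lss \<and> eventually (\<lambda>q. AA q = h q \<and> BB q = BB p) (nhds p)) \<or>
    (\<exists>h\<in>{h3,h4}. ls < h p \<and> h p < lss \<and> eventually (\<lambda>q. BB q = h q \<and> AA q = AA p) (nhds p)) \<or>
    eventually (\<lambda>q. AA q = BB q) (nhds p) \<or>
    (\<exists>hj\<in>{h1,h2}. \<exists>hk\<in>{h3,h4}. eventually (\<lambda>q. ls < hk q \<and> hk q < hj q \<and> hj q < lss
        \<and> max (h3 q) (h4 q) = hk q \<and> min (h1 q) (h2 q) = hj q) (nhds p))"
proof -
  have Hn: "min (h1 p) (h2 p) \<noteq> ls" "min (h1 p) (h2 p) \<noteq> lss" using nz by (auto simp: min_def)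
  have Ln: "max (h3 p) (h4 p) \<noteq> ls" "max (h3 p) (h4 p) \<noteq> lss" using nz by (auto simp: max_def)
  consider (I) "min (h1 p) (h2 p) < ls" | (II) "lss < min (h1 p) (h2 p)"
    | (III) "ls < min (h1 p) (h2 p)" "min (h1 p) (h2 p) < lss" using Hn by linarith
  then show ?thesis
  proof cases
    case I
    have "eventually (\<lambda>q. AA q = AA p \<and> BB q = BB p) (nhds p)"
      using evH_lo[OF I] I lss by (auto simp: AA_def BB_def cl_def elim!: eventually_mono)
    then show ?thesis by blast
  next
    case II
    consider (a) "max (h3 p) (h4 p) < ls" | (b) "lss < max (h3 p) (h4 p)"
      | (c) "ls < max (h3 p) (h4 p)" "max (h3 p) (h4 p) < lss" using Ln by linarith
    then show ?thesis
    proof cases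
      case a
      have "eventually (\<lambda>q. AA q = AA p \<and> BB q = BB p) (nhds p)"
        using eventually_conj[OF evH_hi[OF II] evL_lo[OF a]] II a lss
        by (auto simp: AA_def BB_def cl_def elim!: eventually_mono)
      then show ?thesis by blast
    next
      case b
      have "eventually (\<lambda>q. AA q = AA p \<and> BB q = BB p) (nhds p)"
        using eventually_conj[OF evH_hi[OF II] evL_hi[OF b]] II b lss
        by (auto simp: AA_def BB_def cl_def elim!: eventually_mono)
      then show ?thesis by blast
    next
      case c
      obtain h where h: "h \<in> {h3,h4}" "ls < h p" "h p < lss"
        "eventually (\<lambda>q. max (h3 q) (h4 q) = h q \<and> ls < h q \<and> h q < lss) (nhds p)"
        using locL[OF c] by blast
      have "eventually (\<lambda>q. BB q = h q \<and> AA q = AA p) (nhds p)"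
        using eventually_conj[OF evH_hi[OF II] h(4)] II lss
        by (auto simp: AA_def BB_def cl_def elim!: eventually_mono)
      then show ?thesis using h by blast
    qed
  next
    case III
    obtain hj where hj: "hj \<in> {h1,h2}" "ls < hj p" "hj p < lss"
      "eventually (\<lambda>q. min (h1 q) (h2 q) = hj q \<and> ls < hj q \<and> hj q < lss) (nhds p)"
      using locH[OF III] by blast
    have cj: "isCont hj p" using hj(1) c1 c2 by auto
    have Hp: "min (h1 p) (h2 p) = hj p" using eventually_nhds_x_imp_x[OF hj(4)] by simp
    consider (a) "max (h3 p) (h4 p) < ls" | (b) "lss < max (h3 p) (h4 p)"
      | (c) "ls < max (h3 p) (h4 p)" "max (h3 p) (h4 p) < lss" using Ln by linarith
    then show ?thesis
    proof cases
      case a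
      have "eventually (\<lambda>q. AA q = hj q \<and> BB q = BB p) (nhds p)"
        using eventually_conj[OF hj(4) evL_lo[OF a]] a lss
        by (auto simp: AA_def BB_def cl_def elim!: eventually_mono)
      then show ?thesis using hj by blast
    next
      case b
      have "eventually (\<lambda>q. AA q = BB q) (nhds p)"
        using eventually_conj[OF hj(4) evL_hi[OF b]] lss
        by (auto simp: AA_def BB_def cl_def elim!: eventually_mono)
      then show ?thesis by blast
    next
      case c
      obtain hk where hk: "hk \<in> {h3,h4}" "ls < hk p" "hk p < lss"
        "eventually (\<lambda>q. max (h3 q) (h4 q) = hk q \<and> ls < hk q \<and> hk q < lss) (nhds p)"
        using locL[OF c] by blast
      have ck: "isCont hk p" using hk(1) c3 c4 by auto
      have Lp: "max (h3 p) (h4 p) = hk p" using eventually_nhds_x_imp_x[OF hk(4)] by simp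
      have ne: "hk p \<noteq> hj p" using V[OF III] Hp Lp by simp
      show ?thesis
      proof (cases "hj p < hk p")
        case True
        have "eventually (\<lambda>q. AA q = BB q) (nhds p)"
          using eventually_conj[OF eventually_conj[OF hj(4) hk(4)] ev_less[OF cj ck True]]
          by (auto simp: AA_def BB_def cl_def elim!: eventually_mono)
        then show ?thesis by blast
      next
        case False
        then have lt: "hk p < hj p" using ne by simp
        have "eventually (\<lambda>q. ls < hk q \<and> hk q < hj q \<and> hj q < lss
          \<and> max (h3 q) (h4 q) = hk q \<and> min (h1 q) (h2 q) = hj q) (nhds p)"
          using eventually_conj[OF eventually_conj[OF hj(4) hk(4)] ev_less[OF ck cj lt]]
          by (auto elim!: eventually_mono)
        then show ?thesis using hj(1) hk(1) by blast
      qed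
    qed
  qed
qed

end



lemma Dom_open: "open Dom"
proof -
  have e: "Dom = {q. -1 < snd q} \<inter> {q. snd q < 0} \<inter> {q. -1 < fst q} \<inter> {q::real\<times>real. fst q < snd q + 1}"
    unfolding Dom_def by auto
  show ?thesis unfolding e by (intro open_Int open_Collect_less continuous_intros)
qed

lemma one_plus_sq_ne: "1 + (y::real)\<^sup>2 \<noteq> 0"
  by (smt (verit) zero_le_power2)

lemma contM: "isCont (\<lambda>q. M1 (fst q) (snd q)) p" "isCont (\<lambda>q. M2 (fst q) (snd q)) p"
  "isCont (\<lambda>q. M3 (fst q) (snd q)) p" "isCont (\<lambda>q. M4 (fst q) (snd q)) p"
  unfolding M1_def M2_def M3_def M4_def R1_def R2_def R3_def R4_def Rr_def Mof_def
  by (intro continuous_intros one_plus_sq_ne | simp)+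

lemma ev_ball: "eventually P (nhds p) \<Longrightarrow> \<exists>r>0. \<forall>q\<in>ball p r. P q"
  unfolding eventually_nhds_metric by (auto simp: dist_commute)

lemma Sig_mem:
  assumes ls: "1/2 < ls" "lss < 4/5" and d: "(x,z) \<in> Dom"
  shows "ls \<le> M1 x z \<Longrightarrow> M1 x z \<le> lss \<Longrightarrow> Lo x z \<le> M1 x z \<Longrightarrow> M1 x z \<le> Hi x z \<Longrightarrow> (x,z) \<in> (\<Union>m\<in>{ls..lss}. side_BD m)"
    and "ls \<le> M2 x z \<Longrightarrow> M2 x z \<le> lss \<Longrightarrow> Lo x z \<le> M2 x z \<Longrightarrow> M2 x z \<le> Hi x z \<Longrightarrow> (x,z) \<in> (\<Union>m\<in>{ls..lss}. side_CA m)"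
    and "ls \<le> M3 x z \<Longrightarrow> M3 x z \<le> lss \<Longrightarrow> Lo x z \<le> M3 x z \<Longrightarrow> M3 x z \<le> Hi x z \<Longrightarrow> (x,z) \<in> (\<Union>m\<in>{ls..lss}. side_AB m)"
    and "ls \<le> M4 x z \<Longrightarrow> M4 x z \<le> lss \<Longrightarrow> Lo x z \<le> M4 x z \<Longrightarrow> M4 x z \<le> Hi x z \<Longrightarrow> (x,z) \<in> (\<Union>m\<in>{ls..lss}. side_DC m)"
proof -
  assume a: "ls \<le> M1 x z" "M1 x z \<le> lss" "Lo x z \<le> M1 x z" "M1 x z \<le> Hi x z"
  have "(x,z) \<in> side_BD (M1 x z)" by (rule side1[OF d]) (use a ls in linarith)+
  then show "(x,z) \<in> (\<Union>m\<in>{ls..lss}. side_BD m)" using a(1,2) by (intro UN_I[of "M1 x z"]) simp_all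
next
  assume a: "ls \<le> M2 x z" "M2 x z \<le> lss" "Lo x z \<le> M2 x z" "M2 x z \<le> Hi x z"
  have "(x,z) \<in> side_CA (M2 x z)" by (rule side2[OF d]) (use a ls in linarith)+
  then show "(x,z) \<in> (\<Union>m\<in>{ls..lss}. side_CA m)" using a(1,2) by (intro UN_I[of "M2 x z"]) simp_all
next
  assume a: "ls \<le> M3 x z" "M3 x z \<le> lss" "Lo x z \<le> M3 x z" "M3 x z \<le> Hi x z"
  have "(x,z) \<in> side_AB (M3 x z)" by (rule side3[OF d]) (use a ls in linarith)+
  then show "(x,z) \<in> (\<Union>m\<in>{ls..lss}. side_AB m)" using a(1,2) by (intro UN_I[of "M3 x z"]) simp_all
next
  assume a: "ls \<le> M4 x z" "M4 x z \<le> lss" "Lo x z \<le> M4 x z" "M4 x z \<le> Hi x z"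
  have "(x,z) \<in> side_DC (M4 x z)" by (rule side4[OF d]) (use a ls in linarith)+
  then show "(x,z) \<in> (\<Union>m\<in>{ls..lss}. side_DC m)" using a(1,2) by (intro UN_I[of "M4 x z"]) simp_all
qed

lemma pointwise:
  assumes ls: "1/2 < ls" "ls < lss" "lss < 4/5" and \<sigma>: "continuous_on {ls..lss} \<sigma>"
    and pO: "(x0,z0) \<in> Omega0 ls lss" and pN: "(x0,z0) \<notin> NN ls" "(x0,z0) \<notin> NN lss"
  shows "EE ls lss \<sigma> x0 z0 t1 = EE ls lss \<sigma> x0 z0 t2"
proof -
  define p where "p = (x0, z0)"
  define SCA where "SCA = (\<Union>m\<in>{ls..lss}. side_CA m)"
  define SAB where "SAB = (\<Union>m\<in>{ls..lss}. side_AB m)"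
  define SBD where "SBD = (\<Union>m\<in>{ls..lss}. side_BD m)"
  define SDC where "SDC = (\<Union>m\<in>{ls..lss}. side_DC m)"
  have pI: "p \<in> interior (Dom - (interior (SCA \<inter> SDC) \<union> interior (SCA \<inter> SAB) \<union> interior (SAB \<inter> SBD) \<union> interior (SBD \<inter> SDC)))"
    using pO unfolding Omega0_def Let_def p_def SCA_def SAB_def SBD_def SDC_def .
  have "p \<in> Dom - (interior (SCA \<inter> SDC) \<union> interior (SCA \<inter> SAB) \<union> interior (SAB \<inter> SBD) \<union> interior (SBD \<inter> SDC))"
    by (rule subsetD[OF interior_subset pI])
  then have pD: "p \<in> Dom" and nD: "p \<notin> interior (SCA \<inter> SDC)" "p \<notin> interior (SCA \<inter> SAB)"
    "p \<notin> interior (SAB \<inter> SBD)" "p \<notin> interior (SBD \<inter> SDC)" by simp_all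
  define h1 where "h1 q = M1 (fst q) (snd q)" for q
  define h2 where "h2 q = M2 (fst q) (snd q)" for q
  define h3 where "h3 q = M3 (fst q) (snd q)" for q
  define h4 where "h4 q = M4 (fst q) (snd q)" for q
  have pDx: "(x0,z0) \<in> Dom" using pD p_def by simp
  interpret F: four h1 h2 h3 h4 p ls lss
  proof
    show "isCont h1 p" "isCont h2 p" "isCont h3 p" "isCont h4 p"
      unfolding h1_def h2_def h3_def h4_def by (rule contM)+
    show "ls < lss" by fact
    show "h1 p = h2 p \<Longrightarrow> lss < h1 p" using T1[OF pDx] ls unfolding h1_def h2_def p_def by simp
    show "h3 p = h4 p \<Longrightarrow> h3 p < ls" using T2[OF pDx] ls unfolding h3_def h4_def p_def by simp
  qed
  have nz: "\<forall>h\<in>{h1,h2,h3,h4}. h p \<noteq> ls \<and> h p \<noteq> lss"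
  proof -
    have a: "\<not> (M1 x0 z0 = ls \<or> M2 x0 z0 = ls \<or> M3 x0 z0 = ls \<or> M4 x0 z0 = ls)"
      using NN_mem[OF pDx, of ls] pN ls by auto
    have b: "\<not> (M1 x0 z0 = lss \<or> M2 x0 z0 = lss \<or> M3 x0 z0 = lss \<or> M4 x0 z0 = lss)"
      using NN_mem[OF pDx, of lss] pN ls by auto
    show ?thesis using a b unfolding h1_def h2_def h3_def h4_def p_def by simp
  qed
  have V: "max (h3 p) (h4 p) \<noteq> min (h1 p) (h2 p)" if "ls < min (h1 p) (h2 p)" "min (h1 p) (h2 p) < lss"
  proof
    assume e: "max (h3 p) (h4 p) = min (h1 p) (h2 p)"
    have g: "1/2 < min (h1 p) (h2 p)" using that ls by simp
    have mm: "min (h1 p) (h2 p) = h1 p \<or> min (h1 p) (h2 p) = h2 p" by (simp add: min_def)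
    have MM: "max (h3 p) (h4 p) = h3 p \<or> max (h3 p) (h4 p) = h4 p" by (simp add: max_def)
    have hh: "h1 p = M1 x0 z0" "h2 p = M2 x0 z0" "h3 p = M3 x0 z0" "h4 p = M4 x0 z0"
      unfolding h1_def h2_def h3_def h4_def p_def by simp_all
    show False using mm MM
    proof (elim disjE)
      assume "min (h1 p) (h2 p) = h1 p" "max (h3 p) (h4 p) = h3 p"
      then show False using V13[OF pDx] e g hh by simp
    next
      assume "min (h1 p) (h2 p) = h1 p" "max (h3 p) (h4 p) = h4 p"
      then show False using V14[OF pDx] e g hh by simp
    next
      assume "min (h1 p) (h2 p) = h2 p" "max (h3 p) (h4 p) = h3 p"
      then show False using V23[OF pDx] e g hh by simp
    next
      assume "min (h1 p) (h2 p) = h2 p" "max (h3 p) (h4 p) = h4 p"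
      then show False using V24[OF pDx] e g hh by simp
    qed
  qed
  have glob: "\<forall>q\<in>Dom. \<forall>t. psi ls lss \<sigma> (fst q) (snd q) t = Phi ls \<sigma> t (F.AA q) - Phi ls \<sigma> t (F.BB q)"
  proof (intro ballI allI)
    fix q t assume q: "q \<in> Dom"
    obtain x z where qq: "q = (x,z)" by (cases q)
    have "psi ls lss \<sigma> x z t = Phi ls \<sigma> t (cl ls lss (Hi x z)) - Phi ls \<sigma> t (cl ls lss (min (Lo x z) (Hi x z)))"
      by (rule psi_formula[OF _ ls(1) _ _ \<sigma>]) (use q qq ls in auto)
    then show "psi ls lss \<sigma> (fst q) (snd q) t = Phi ls \<sigma> t (F.AA q) - Phi ls \<sigma> t (F.BB q)"
      unfolding F.AA_def F.BB_def Hi_def Lo_def h1_def h2_def h3_def h4_def qq by simp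
  qed
  have evD: "eventually (\<lambda>q. q \<in> Dom) (nhds p)"
    using Dom_open pD eventually_nhds by blast
  have ls0: "0 < ls" using ls by simp
  show ?thesis
    unfolding p_def[symmetric]
  proof -
    have cases: "eventually (\<lambda>q. F.AA q = F.AA p \<and> F.BB q = F.BB p) (nhds p) \<or>
    (\<exists>h\<in>{h1,h2}. ls < h p \<and> h p < lss \<and> eventually (\<lambda>q. F.AA q = h q \<and> F.BB q = F.BB p) (nhds p)) \<or>
    (\<exists>h\<in>{h3,h4}. ls < h p \<and> h p < lss \<and> eventually (\<lambda>q. F.BB q = h q \<and> F.AA q = F.AA p) (nhds p)) \<or>
    eventually (\<lambda>q. F.AA q = F.BB q) (nhds p) \<or>
    (\<exists>hj\<in>{h1,h2}. \<exists>hk\<in>{h3,h4}. eventually (\<lambda>q. ls < hk q \<and> hk q < hj q \<and> hj q < lss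
        \<and> max (h3 q) (h4 q) = hk q \<and> min (h1 q) (h2 q) = hj q) (nhds p))"
      by (rule F.main_cases[OF nz V])
    have ballD: "\<exists>r>0. \<forall>q\<in>ball (x0,z0) r. P q \<and> q \<in> Dom" if "eventually P (nhds p)" for P
      using ev_ball[OF eventually_conj[OF that evD]] unfolding p_def .
    have cst: "EE ls lss \<sigma> x0 z0 t1 = EE ls lss \<sigma> x0 z0 t2"
      if "r > 0" "\<forall>q\<in>ball (x0,z0) r. \<forall>t. psi ls lss \<sigma> (fst q) (snd q) t = C t" for r C
      using energy_const[OF that] by simp
    have act: "EE ls lss \<sigma> x0 z0 t1 = EE ls lss \<sigma> x0 z0 t2"
      if "r > 0" "\<forall>q\<in>ball (x0,z0) r. \<forall>t. psi ls lss \<sigma> (fst q) (snd q) t = \<epsilon> * Phi ls \<sigma> t (M (fst q) (snd q)) + C t"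
        "\<epsilon>\<^sup>2 = 1" "ls < M x0 z0" "M x0 z0 < lss" "slices M x0 z0" for r \<epsilon> M C
      by (rule energy_active[OF that(1,2,3,4,5) ls0 \<sigma> that(6)])
    have hp: "h1 p = M1 x0 z0" "h2 p = M2 x0 z0" "h3 p = M3 x0 z0" "h4 p = M4 x0 z0"
      unfolding h1_def h2_def h3_def h4_def p_def by simp_all
    have SD: "S \<subseteq> SBD" if "\<forall>q\<in>S. q \<in> Dom \<and> ls < h1 q \<and> h1 q < lss \<and> Lo (fst q) (snd q) \<le> h1 q \<and> h1 q \<le> Hi (fst q) (snd q)" for S
    proof
      fix q assume "q \<in> S" then obtain x z where "q = (x,z)" "(x,z) \<in> S" by (cases q) auto
      then show "q \<in> SBD" using that Sig_mem(1)[of ls lss x z] ls unfolding SBD_def h1_def by force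
    qed
    have SC: "S \<subseteq> SCA" if "\<forall>q\<in>S. q \<in> Dom \<and> ls < h2 q \<and> h2 q < lss \<and> Lo (fst q) (snd q) \<le> h2 q \<and> h2 q \<le> Hi (fst q) (snd q)" for S
    proof
      fix q assume "q \<in> S" then obtain x z where "q = (x,z)" "(x,z) \<in> S" by (cases q) auto
      then show "q \<in> SCA" using that Sig_mem(2)[of ls lss x z] ls unfolding SCA_def h2_def by force
    qed
    have SA: "S \<subseteq> SAB" if "\<forall>q\<in>S. q \<in> Dom \<and> ls < h3 q \<and> h3 q < lss \<and> Lo (fst q) (snd q) \<le> h3 q \<and> h3 q \<le> Hi (fst q) (snd q)" for S
    proof
      fix q assume "q \<in> S" then obtain x z where "q = (x,z)" "(x,z) \<in> S" by (cases q) auto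
      then show "q \<in> SAB" using that Sig_mem(3)[of ls lss x z] ls unfolding SAB_def h3_def by force
    qed
    have SDC': "S \<subseteq> SDC" if "\<forall>q\<in>S. q \<in> Dom \<and> ls < h4 q \<and> h4 q < lss \<and> Lo (fst q) (snd q) \<le> h4 q \<and> h4 q \<le> Hi (fst q) (snd q)" for S
    proof
      fix q assume "q \<in> S" then obtain x z where "q = (x,z)" "(x,z) \<in> S" by (cases q) auto
      then show "q \<in> SDC" using that Sig_mem(4)[of ls lss x z] ls unfolding SDC_def h4_def by force
    qed
    have LoHi: "Lo (fst q) (snd q) = max (h3 q) (h4 q)" "Hi (fst q) (snd q) = min (h1 q) (h2 q)" for q
      unfolding Lo_def Hi_def h1_def h2_def h3_def h4_def by simp_all
    show "EE ls lss \<sigma> x0 z0 t1 = EE ls lss \<sigma> x0 z0 t2"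
      using cases
    proof (elim disjE)
      assume "eventually (\<lambda>q. F.AA q = F.AA p \<and> F.BB q = F.BB p) (nhds p)"
      then obtain r where r: "r > 0" "\<forall>q\<in>ball (x0,z0) r. (F.AA q = F.AA p \<and> F.BB q = F.BB p) \<and> q \<in> Dom"
        using ballD by blast
      show ?thesis by (rule cst[OF r(1), of "\<lambda>t. Phi ls \<sigma> t (F.AA p) - Phi ls \<sigma> t (F.BB p)"]) (use r glob in auto)
    next
      assume "eventually (\<lambda>q. F.AA q = F.BB q) (nhds p)"
      then obtain r where r: "r > 0" "\<forall>q\<in>ball (x0,z0) r. F.AA q = F.BB q \<and> q \<in> Dom"
        using ballD by blast
      show ?thesis by (rule cst[OF r(1), of "\<lambda>t. 0"]) (use r glob in auto)
    next
      assume "\<exists>h\<in>{h1,h2}. ls < h p \<and> h p < lss \<and> eventually (\<lambda>q. F.AA q = h q \<and> F.BB q = F.BB p) (nhds p)"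
      then obtain h where h: "h \<in> {h1,h2}" "ls < h p" "h p < lss" "eventually (\<lambda>q. F.AA q = h q \<and> F.BB q = F.BB p) (nhds p)"
        by blast
      obtain r where r: "r > 0" "\<forall>q\<in>ball (x0,z0) r. (F.AA q = h q \<and> F.BB q = F.BB p) \<and> q \<in> Dom"
        using ballD[OF h(4)] by blast
      have eq: "\<forall>q\<in>ball (x0,z0) r. \<forall>t. psi ls lss \<sigma> (fst q) (snd q) t = 1 * Phi ls \<sigma> t (h q) + (- Phi ls \<sigma> t (F.BB p))"
        using r glob by auto
      show ?thesis using h(1)
      proof (elim insertE emptyE)
        assume hh: "h = h1"
        show ?thesis by (rule act[OF r(1), of 1 M1]) (use eq h hh hp slices1[OF pDx] in \<open>auto simp: h1_def\<close>)
      next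
        assume hh: "h = h2"
        show ?thesis by (rule act[OF r(1), of 1 M2]) (use eq h hh hp slices2[OF pDx] in \<open>auto simp: h2_def\<close>)
      qed
    next
      assume "\<exists>h\<in>{h3,h4}. ls < h p \<and> h p < lss \<and> eventually (\<lambda>q. F.BB q = h q \<and> F.AA q = F.AA p) (nhds p)"
      then obtain h where h: "h \<in> {h3,h4}" "ls < h p" "h p < lss" "eventually (\<lambda>q. F.BB q = h q \<and> F.AA q = F.AA p) (nhds p)"
        by blast
      obtain r where r: "r > 0" "\<forall>q\<in>ball (x0,z0) r. (F.BB q = h q \<and> F.AA q = F.AA p) \<and> q \<in> Dom"
        using ballD[OF h(4)] by blast
      have eq: "\<forall>q\<in>ball (x0,z0) r. \<forall>t. psi ls lss \<sigma> (fst q) (snd q) t = (-1) * Phi ls \<sigma> t (h q) + Phi ls \<sigma> t (F.AA p)"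
        using r glob by auto
      have half: "1/2 < h p" using h ls by simp
      show ?thesis using h(1)
      proof (elim insertE emptyE)
        assume hh: "h = h3"
        show ?thesis by (rule act[OF r(1), of "-1" M3]) (use eq h hh hp half slices3[OF pDx] in \<open>auto simp: h3_def\<close>)
      next
        assume hh: "h = h4"
        show ?thesis by (rule act[OF r(1), of "-1" M4]) (use eq h hh hp half slices4[OF pDx] in \<open>auto simp: h4_def\<close>)
      qed
    next
      assume "\<exists>hj\<in>{h1,h2}. \<exists>hk\<in>{h3,h4}. eventually (\<lambda>q. ls < hk q \<and> hk q < hj q \<and> hj q < lss
        \<and> max (h3 q) (h4 q) = hk q \<and> min (h1 q) (h2 q) = hj q) (nhds p)"
      then obtain hj hk where hjk: "hj \<in> {h1,h2}" "hk \<in> {h3,h4}"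
        and ev: "eventually (\<lambda>q. ls < hk q \<and> hk q < hj q \<and> hj q < lss
        \<and> max (h3 q) (h4 q) = hk q \<and> min (h1 q) (h2 q) = hj q) (nhds p)" by blast
      obtain S where S: "open S" "p \<in> S" "\<forall>q\<in>S. (ls < hk q \<and> hk q < hj q \<and> hj q < lss
        \<and> max (h3 q) (h4 q) = hk q \<and> min (h1 q) (h2 q) = hj q) \<and> q \<in> Dom"
        using eventually_conj[OF ev evD] unfolding eventually_nhds by blast
      have Sj: "\<forall>q\<in>S. q \<in> Dom \<and> ls < hj q \<and> hj q < lss \<and> Lo (fst q) (snd q) \<le> hj q \<and> hj q \<le> Hi (fst q) (snd q)"
        using S(3) unfolding LoHi by auto
      have Sk: "\<forall>q\<in>S. q \<in> Dom \<and> ls < hk q \<and> hk q < lss \<and> Lo (fst q) (snd q) \<le> hk q \<and> hk q \<le> Hi (fst q) (snd q)"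
        using S(3) unfolding LoHi by auto
      show ?thesis using hjk
      proof (elim insertE emptyE)
        assume "hj = h1" "hk = h3"
        then have "p \<in> interior (SAB \<inter> SBD)" using SD[of S] SA[of S] Sj Sk S(1,2) by (intro interiorI[of S]) auto
        then show ?thesis using nD by simp
      next
        assume "hj = h1" "hk = h4"
        then have "p \<in> interior (SBD \<inter> SDC)" using SD[of S] SDC'[of S] Sj Sk S(1,2) by (intro interiorI[of S]) auto
        then show ?thesis using nD by simp
      next
        assume "hj = h2" "hk = h3"
        then have "p \<in> interior (SCA \<inter> SAB)" using SC[of S] SA[of S] Sj Sk S(1,2) by (intro interiorI[of S]) auto
        then show ?thesis using nD by simp
      next
        assume "hj = h2" "hk = h4"
        then have "p \<in> interior (SCA \<inter> SDC)" using SC[of S] SDC'[of S] Sj Sk S(1,2) by (intro interiorI[of S]) auto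
        then show ?thesis using nD by simp
      qed
    qed
  qed
qed


theorem theorem4p3:
  fixes ls lss :: real and \<sigma>0 :: "real \<Rightarrow> real" and \<Omega>1 :: "(real \<times> real) set"
    and t1 t2 :: real
  assumes "1/2 < ls" and "ls < lss" and "lss < 4/5"
    and "C1_on_closed {1/2..4/5} \<sigma>0"
    and "lipschitz_domain \<Omega>1" and "\<Omega>1 \<subseteq> Omega0 ls lss"
  shows "integral \<Omega>1 (\<lambda>(x, z). (uvel ls lss \<sigma>0 x z t1)\<^sup>2 + (vvel ls lss \<sigma>0 x z t1)\<^sup>2 + (wvel ls lss \<sigma>0 x z t1)\<^sup>2)
       = integral \<Omega>1 (\<lambda>(x, z). (uvel ls lss \<sigma>0 x z t2)\<^sup>2 + (vvel ls lss \<sigma>0 x z t2)\<^sup>2 + (wvel ls lss \<sigma>0 x z t2)\<^sup>2)"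
proof -
  obtain D where D: "\<forall>x\<in>{1/2..4/5}. (\<sigma>0 has_real_derivative D x) (at x within {1/2..4/5})"
    using assms(4) unfolding C1_on_closed_def by blast
  have "continuous_on {1/2..4/5} \<sigma>0" by (rule DERIV_continuous_on) (use D in blast)
  then have \<sigma>: "continuous_on {ls..lss} \<sigma>0" by (rule continuous_on_subset) (use assms(1-3) in auto)
  show ?thesis
  proof (rule integral_spike[OF negligible_Un[OF NN_negligible NN_negligible, of ls lss]])
    fix q assume q: "q \<in> \<Omega>1 - (NN ls \<union> NN lss)"
    obtain x z where qq: "q = (x,z)" by (cases q)
    have "EE ls lss \<sigma>0 x z t2 = EE ls lss \<sigma>0 x z t1"
      by (rule pointwise[OF assms(1-3) \<sigma>]) (use q qq assms(6) in auto)
    then show "(\<lambda>(x, z). (uvel ls lss \<sigma>0 x z t2)\<^sup>2 + (vvel ls lss \<sigma>0 x z t2)\<^sup>2 + (wvel ls lss \<sigma>0 x z t2)\<^sup>2) q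
      = (\<lambda>(x, z). (uvel ls lss \<sigma>0 x z t1)\<^sup>2 + (vvel ls lss \<sigma>0 x z t1)\<^sup>2 + (wvel ls lss \<sigma>0 x z t1)\<^sup>2) q"
      unfolding qq EE_def by simp
  qed
qed

end
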